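(* There exists a family $(F_n)_{n\in\mathbb{N}}$ of CNF formulas such that each $F_n$ can be represented by a TDD of size polynomial in $n$, while every OBDD representing $F_n$ has size at least $n^{c\log n}$, for some constant $c>0$.
   Context: A CNF formula is a conjunction of clauses (disjunctions of literals). An OBDD over $X$ is a directed acyclic graph with a unique source, sinks labeled $0$ or $1$, and decision nodes labeled by variables with two outgoing edges labeled $0,1$, such that along every path the tested variables respect a fixed order of $X$; it accepts $\tau$ iff following the edges labeled by $\tau$ from the source reaches a $1$-sink. A vtree over $X$ is a rooted tree whose internal nodes have exactly two ordered children and whose leaves are labeled bijectively by $X$; $X_t$ is the set of variables below node $t$. An nTDD $C=(N,E)$ respecting $T$ has nodes $N=\biguplus_t N_t$ ($t$-nodes); leaf $t$-nodes (leaf labeled $x$) carry a label in $\{x,\neg x,1,0\}$ and compute that literal/constant; an internal $t$-node $g$ with children $t_1,t_2$ has inputs $E(g)\subseteq N_{t_1}\times N_{t_2}$ and computes $f_g=\bigvee_{(g_1,g_2)\in E(g)}(f_{g_1}\wedge f_{g_2})$ over $X_t$; the root-node $\mathrm{out}$ gives the computed function. Size $|C|=\sum_g|E(g)|$. A TDD is an nTDD such that for every leaf $t$ labeled $x$, $N_t$ has at most one node labeled $x$, at most one labeled $\neg x$, at most one labeled $1$, and if one is labeled $1$ all others are labeled $0$; and for every internal $t$, distinct $t$-nodes have disjoint input sets. *)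

theory Defs
  imports Complex_Main
begin

type_synonym var = nat
type_synonym assignment = "var \<Rightarrow> bool"

text \<open>A literal is a pair (x, b): positive literal x if b = True, negative literal if b = False.
  A clause is a list of literals (their disjunction), a CNF a list of clauses (their conjunction).\<close>
type_synonym lit = "var \<times> bool"
type_synonym clause = "lit list"
type_synonym cnf = "clause list"

definition cnf_sem :: "cnf \<Rightarrow> assignment \<Rightarrow> bool" where
  "cnf_sem F \<tau> \<longleftrightarrow> (\<forall>C\<in>set F. \<exists>(x, b)\<in>set C. \<tau> x = b)"

definition cnf_vars :: "cnf \<Rightarrow> var set" where
  "cnf_vars F = (\<Union>C\<in>set F. fst ` set C)"

datatype obdd_label = Sink bool | Dec var nat nat  \<comment> \<open>Dec x lo hi: test x, 0-edge to lo, 1-edge to hi\<close>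

record obdd =
  bnodes :: "nat set"
  bsrc :: nat
  blab :: "nat \<Rightarrow> obdd_label"

definition obdd_edge :: "obdd \<Rightarrow> nat \<Rightarrow> nat \<Rightarrow> bool" where
  "obdd_edge B u v \<longleftrightarrow> u \<in> bnodes B \<and>
     (\<exists>x l h. blab B u = Dec x l h \<and> (v = l \<or> v = h))"

text \<open>Variable order on X given by an injective rank function r (x before y iff r x < r y); every decision node tests a variable strictly
  earlier in the order than any variable tested by its children (hence along every path the
  tested variables respect the order, and the graph is acyclic).\<close>
definition obdd_below :: "(var \<Rightarrow> nat) \<Rightarrow> obdd \<Rightarrow> var \<Rightarrow> nat \<Rightarrow> bool" where
  "obdd_below ord B x v \<longleftrightarrow>
     (case blab B v of Sink _ \<Rightarrow> True | Dec y _ _ \<Rightarrow> ord x < ord y)"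

definition is_obdd :: "obdd \<Rightarrow> var set \<Rightarrow> bool" where
  "is_obdd B X \<longleftrightarrow>
     finite (bnodes B) \<and> bsrc B \<in> bnodes B \<and>
     (\<forall>v\<in>bnodes B. (obdd_edge B)\<^sup>*\<^sup>* (bsrc B) v) \<and>
     (\<exists>ord. inj_on ord X \<and>
        (\<forall>u\<in>bnodes B. case blab B u of
            Sink _ \<Rightarrow> True
          | Dec x l h \<Rightarrow> x \<in> X \<and> l \<in> bnodes B \<and> h \<in> bnodes B \<and>
                         obdd_below ord B x l \<and> obdd_below ord B x h))"

definition obdd_step :: "obdd \<Rightarrow> assignment \<Rightarrow> nat \<Rightarrow> nat \<Rightarrow> bool" where
  "obdd_step B \<tau> u v \<longleftrightarrow>
     (\<exists>x l h. blab B u = Dec x l h \<and> v = (if \<tau> x then h else l))"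

definition obdd_accepts :: "obdd \<Rightarrow> assignment \<Rightarrow> bool" where
  "obdd_accepts B \<tau> \<longleftrightarrow>
     (\<exists>v. (obdd_step B \<tau>)\<^sup>*\<^sup>* (bsrc B) v \<and> blab B v = Sink True)"

definition obdd_size :: "obdd \<Rightarrow> nat" where
  "obdd_size B = card (bnodes B)"

datatype vtree = VLeaf var | VNode vtree vtree

fun vt_leaves :: "vtree \<Rightarrow> var list" where
  "vt_leaves (VLeaf x) = [x]"
| "vt_leaves (VNode t1 t2) = vt_leaves t1 @ vt_leaves t2"

fun vt_subtrees :: "vtree \<Rightarrow> vtree set" where
  "vt_subtrees (VLeaf x) = {VLeaf x}"
| "vt_subtrees (VNode t1 t2) = insert (VNode t1 t2) (vt_subtrees t1 \<union> vt_subtrees t2)"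

text \<open>Vtree over X: leaves labelled bijectively by X. Since leaf labels are distinct,
  nodes of the vtree are identified with the subtrees rooted at them.\<close>
definition vtree_over :: "vtree \<Rightarrow> var set \<Rightarrow> bool" where
  "vtree_over T X \<longleftrightarrow> distinct (vt_leaves T) \<and> set (vt_leaves T) = X"

text \<open>Labels of leaf t-nodes (leaf t labelled x): LPos = x, LNeg = \<not>x, LConst b = constant b.\<close>
datatype leaf_label = LPos | LNeg | LConst bool

record tdd =
  tnodes :: "nat set"
  tvt :: "nat \<Rightarrow> vtree"                 \<comment> \<open>g is a t-node iff tvt g = t\<close>
  tlab :: "nat \<Rightarrow> leaf_label"
  tin :: "nat \<Rightarrow> (nat \<times> nat) set"
  tout :: nat

definition is_ntdd :: "tdd \<Rightarrow> vtree \<Rightarrow> bool" where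
  "is_ntdd C T \<longleftrightarrow>
     finite (tnodes C) \<and> tout C \<in> tnodes C \<and> tvt C (tout C) = T \<and>
     (\<forall>g\<in>tnodes C. tvt C g \<in> vt_subtrees T) \<and>
     (\<forall>g\<in>tnodes C. case tvt C g of
         VLeaf x \<Rightarrow> tin C g = {}
       | VNode t1 t2 \<Rightarrow> tin C g \<subseteq> {(g1, g2). g1 \<in> tnodes C \<and> g2 \<in> tnodes C \<and>
                                        tvt C g1 = t1 \<and> tvt C g2 = t2})"

definition is_tdd :: "tdd \<Rightarrow> vtree \<Rightarrow> bool" where
  "is_tdd C T \<longleftrightarrow> is_ntdd C T \<and>
     (\<forall>x g g'. g \<in> tnodes C \<and> g' \<in> tnodes C \<and> tvt C g = VLeaf x \<and> tvt C g' = VLeaf x \<longrightarrow>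
        (tlab C g = LPos \<and> tlab C g' = LPos \<longrightarrow> g = g') \<and>
        (tlab C g = LNeg \<and> tlab C g' = LNeg \<longrightarrow> g = g') \<and>
        (tlab C g = LConst True \<and> tlab C g' = LConst True \<longrightarrow> g = g') \<and>
        (tlab C g = LConst True \<and> g' \<noteq> g \<longrightarrow> tlab C g' = LConst False)) \<and>
     (\<forall>t1 t2 g g'. g \<in> tnodes C \<and> g' \<in> tnodes C \<and> tvt C g = VNode t1 t2 \<and>
        tvt C g' = VNode t1 t2 \<and> g \<noteq> g' \<longrightarrow> tin C g \<inter> tin C g' = {})"

fun tdd_eval :: "tdd \<Rightarrow> vtree \<Rightarrow> nat \<Rightarrow> assignment \<Rightarrow> bool" where
  "tdd_eval C (VLeaf x) g \<tau> =
     (case tlab C g of LPos \<Rightarrow> \<tau> x | LNeg \<Rightarrow> \<not> \<tau> x | LConst b \<Rightarrow> b)"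
| "tdd_eval C (VNode t1 t2) g \<tau> =
     (\<exists>(g1, g2)\<in>tin C g. tdd_eval C t1 g1 \<tau> \<and> tdd_eval C t2 g2 \<tau>)"

definition tdd_computes :: "tdd \<Rightarrow> vtree \<Rightarrow> assignment \<Rightarrow> bool" where
  "tdd_computes C T \<tau> = tdd_eval C T (tout C) \<tau>"

definition tdd_size :: "tdd \<Rightarrow> nat" where
  "tdd_size C = (\<Sum>g\<in>tnodes C. card (tin C g))"

end

theory Submission
  imports Defs "HOL-Library.Countable" "HOL-Library.Discrete_Functions"
begin

type_synonym vert = "nat list \<times> nat"

definition Adr :: "nat \<Rightarrow> nat list set" where
  "Adr D = {w. length w \<le> D \<and> (\<forall>a\<in>set w. a < 3)}"

definition Vs :: "nat \<Rightarrow> nat \<Rightarrow> vert set" where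
  "Vs K D = {(w, i). w \<in> Adr D \<and> i < K}"

definition adj :: "vert \<Rightarrow> vert \<Rightarrow> bool" where
  "adj u v \<longleftrightarrow> (fst u = fst v \<and> snd u \<noteq> snd v) \<or>
     (snd u = snd v \<and> (\<exists>a<3. fst v = fst u @ [a] \<or> fst u = fst v @ [a]))"

lemma adj_sym: "adj u v \<Longrightarrow> adj v u"
  unfolding adj_def by auto

definition cmatch :: "(vert \<Rightarrow> nat) \<Rightarrow> nat \<Rightarrow> vert set \<Rightarrow> (vert \<times> vert) set \<Rightarrow> bool" where
  "cmatch ord \<theta> A P \<longleftrightarrow> finite P \<and> (\<forall>(u, v)\<in>P. u \<in> A \<and> v \<in> A \<and> adj u v \<and> ord u < \<theta> \<and> \<theta> \<le> ord v) \<and>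
     inj_on fst P \<and> inj_on snd P"

lemma finite_Adr: "finite (Adr D)"
proof -
  have "Adr D \<subseteq> {w. set w \<subseteq> {0..<3} \<and> length w \<le> D}" unfolding Adr_def by auto
  moreover have "finite {w. set w \<subseteq> {0..<3::nat} \<and> length w \<le> D}"
    by (rule finite_lists_length_le) simp
  ultimately show ?thesis by (rule finite_subset)
qed

lemma finite_Vs: "finite (Vs K D)"
proof -
  have "Vs K D \<subseteq> Adr D \<times> {0..<K}" unfolding Vs_def by auto
  moreover have "finite (Adr D \<times> {0..<K})" using finite_Adr by simp
  ultimately show ?thesis by (rule finite_subset)
qed

lemma connect_edge:
  fixes W :: "nat list set" and C :: "vert set" and ord :: "vert \<Rightarrow> nat"
  assumes W0: "[] \<in> W" and Wp: "\<And>w a. w @ [a] \<in> W \<Longrightarrow> a < 3 \<Longrightarrow> w \<in> W"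
    and Wa: "\<And>w. w \<in> W \<Longrightarrow> \<forall>a\<in>set w. a < 3"
    and A: "A = {(w, i). w \<in> W \<and> i < K}"
    and finC: "finite C" and cC: "card C < K"
    and u: "u \<in> A - C" "ord u < \<theta>" and v: "v \<in> A - C" "\<theta> \<le> ord v"
  shows "\<exists>p q. p \<in> A - C \<and> q \<in> A - C \<and> adj p q \<and> ord p < \<theta> \<and> \<theta> \<le> ord q"
proof (rule ccontr)
  assume no: "\<not> ?thesis"
  have mono: "(ord p < \<theta>) = (ord q < \<theta>)" if "p \<in> A - C" "q \<in> A - C" "adj p q" for p q
  proof (rule ccontr)
    assume ne: "(ord p < \<theta>) \<noteq> (ord q < \<theta>)"
    show False
    proof (cases "ord p < \<theta>")
      case True
      then have "\<theta> \<le> ord q" using ne by (simp add: not_less)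
      then show False using no that True by blast
    next
      case False
      then have "ord q < \<theta>" "\<theta> \<le> ord p" using ne by auto
      then show False using no that adj_sym[OF that(3)] by blast
    qed
  qed
  have "card (snd ` C) \<le> card C" using finC by (rule card_image_le)
  then have nsub: "\<not> {0..<K} \<subseteq> snd ` C"
  proof -
    assume a: "card (snd ` C) \<le> card C"
    show ?thesis
    proof
      assume "{0..<K} \<subseteq> snd ` C"
      then have "card {0..<K} \<le> card (snd ` C)" using finC by (intro card_mono) auto
      then show False using a cC by simp
    qed
  qed
  obtain i where i: "i < K" "i \<notin> snd ` C" using nsub by (meson atLeastLessThan_iff subsetI zero_le)
  have inA: "(w, i) \<in> A - C" if "w \<in> W" for w
    using that i A by (auto simp: image_iff)
  have layer: "(ord (w, i) < \<theta>) = (ord ([], i) < \<theta>)" if "w \<in> W" for w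
    using that
  proof (induction w rule: rev_induct)
    case Nil
    then show ?case by simp
  next
    case (snoc a w)
    have a3: "a < 3" using Wa[OF snoc.prems] by simp
    have wW: "w \<in> W" using Wp[OF snoc.prems a3] .
    have "adj (w, i) (w @ [a], i)" unfolding adj_def using a3 by auto
    then have "(ord (w, i) < \<theta>) = (ord (w @ [a], i) < \<theta>)"
      using mono inA wW snoc.prems by blast
    then show ?case using snoc.IH[OF wW] by simp
  qed
  have blk: "(ord p < \<theta>) = (ord ([], i) < \<theta>)" if pA: "p \<in> A - C" for p
  proof -
    obtain w j where p: "p = (w, j)" "w \<in> W" "j < K" using pA A by auto
    have "(ord p < \<theta>) = (ord (w, i) < \<theta>)"
    proof (cases "j = i")
      case True then show ?thesis using p by simp
    next
      case False
      then have "adj p (w, i)" using p unfolding adj_def by auto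
      then show ?thesis using mono pA inA[OF p(2)] by blast
    qed
    then show ?thesis using layer[OF p(2)] by simp
  qed
  show False using blk[OF u(1)] blk[OF v(1)] u(2) v(2) by simp
qed

lemma greedy:
  fixes W :: "nat list set" and ord :: "vert \<Rightarrow> nat"
  assumes W0: "[] \<in> W" and Wp: "\<And>w a. w @ [a] \<in> W \<Longrightarrow> a < 3 \<Longrightarrow> w \<in> W"
    and Wa: "\<And>w. w \<in> W \<Longrightarrow> \<forall>a\<in>set w. a < 3"
    and A: "A = {(w, i). w \<in> W \<and> i < K}" and finA: "finite A"
  shows "finite C \<Longrightarrow> card C + 2 * j < K + 2 \<Longrightarrow> j \<le> card {x \<in> A - C. ord x < \<theta>} \<Longrightarrow>
    j \<le> card {x \<in> A - C. \<theta> \<le> ord x} \<Longrightarrow> \<exists>P. cmatch ord \<theta> (A - C) P \<and> card P = j"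
proof (induction j arbitrary: C)
  case 0
  then show ?case by (intro exI[of _ "{}"]) (simp add: cmatch_def)
next
  case (Suc j)
  have "0 < card {x \<in> A - C. ord x < \<theta>}" using Suc.prems(3) by simp
  then have "{x \<in> A - C. ord x < \<theta>} \<noteq> {}" by (metis card.empty less_irrefl)
  then obtain u where u: "u \<in> A - C" "ord u < \<theta>" by auto
  have "0 < card {x \<in> A - C. \<theta> \<le> ord x}" using Suc.prems(4) by simp
  then have "{x \<in> A - C. \<theta> \<le> ord x} \<noteq> {}" by (metis card.empty less_irrefl)
  then obtain v where v: "v \<in> A - C" "\<theta> \<le> ord v" by auto
  from connect_edge[OF W0 Wp Wa A Suc.prems(1) _ u v] Suc.prems(2)
  obtain p q where pq: "p \<in> A - C" "q \<in> A - C" "adj p q" "ord p < \<theta>" "\<theta> \<le> ord q" by fastforce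
  define C' where "C' = insert p (insert q C)"
  have fC': "finite C'" using Suc.prems(1) unfolding C'_def by simp
  have cC': "card C' \<le> card C + 2" unfolding C'_def using Suc.prems(1)
    by (simp add: card_insert_if)
  have L: "{x \<in> A - C'. ord x < \<theta>} = {x \<in> A - C. ord x < \<theta>} - {p}" unfolding C'_def using pq by auto
  have R: "{x \<in> A - C'. \<theta> \<le> ord x} = {x \<in> A - C. \<theta> \<le> ord x} - {q}" unfolding C'_def using pq by auto
  have fL: "finite {x \<in> A - C. ord x < \<theta>}" "finite {x \<in> A - C. \<theta> \<le> ord x}" using finA by auto
  have "j \<le> card {x \<in> A - C'. ord x < \<theta>}" unfolding L using Suc.prems(3) fL pq
    by (simp add: card_Diff_singleton_if)
  moreover have "j \<le> card {x \<in> A - C'. \<theta> \<le> ord x}" unfolding R using Suc.prems(4) fL pq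
    by (simp add: card_Diff_singleton_if)
  moreover have "card C' + 2 * j < K + 2" using cC' Suc.prems(2) by simp
  ultimately obtain P where P: "cmatch ord \<theta> (A - C') P" "card P = j" using Suc.IH[OF fC'] by blast
  have notin: "p \<notin> fst ` P" "q \<notin> snd ` P" "(p, q) \<notin> P"
  proof -
    have "\<forall>(u, v)\<in>P. u \<in> A - C' \<and> v \<in> A - C'" using P(1) unfolding cmatch_def by blast
    then have "\<forall>(u, v)\<in>P. u \<noteq> p \<and> v \<noteq> q" unfolding C'_def by blast
    then show "p \<notin> fst ` P" "q \<notin> snd ` P" "(p, q) \<notin> P" by force+
  qed
  have P1: "finite P" "\<forall>(u, v)\<in>P. u \<in> A - C' \<and> v \<in> A - C' \<and> adj u v \<and> ord u < \<theta> \<and> \<theta> \<le> ord v"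
      "inj_on fst P" "inj_on snd P" using P(1) unfolding cmatch_def by auto
  have "A - C' \<subseteq> A - C" unfolding C'_def by auto
  then have "\<forall>(u, v)\<in>insert (p, q) P. u \<in> A - C \<and> v \<in> A - C \<and> adj u v \<and> ord u < \<theta> \<and> \<theta> \<le> ord v"
    using P1(2) pq by blast
  moreover have "inj_on fst (insert (p, q) P)" using P1(3) notin(1)
    by (simp add: inj_on_insert) (metis image_mono Diff_subset subsetD)
  moreover have "inj_on snd (insert (p, q) P)" using P1(4) notin(2)
    by (simp add: inj_on_insert) (metis image_mono Diff_subset subsetD)
  ultimately have "cmatch ord \<theta> (A - C) (insert (p, q) P)"
    using P1(1) unfolding cmatch_def by blast
  moreover have "card (insert (p, q) P) = Suc j" using P notin unfolding cmatch_def by simp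
  ultimately show ?case by blast
qed

lemma dIVT: "f 0 \<le> m \<Longrightarrow> m \<le> f N \<Longrightarrow> (\<And>t. f (Suc t) \<le> Suc (f t)) \<Longrightarrow> \<exists>t. f t = (m::nat)"
proof (induction N)
  case 0 then show ?case by auto
next
  case (Suc N)
  show ?case
  proof (cases "m \<le> f N")
    case True then show ?thesis using Suc by blast
  next
    case False then show ?thesis using Suc.prems(2) Suc.prems(3)[of N] by (intro exI[of _ "Suc N"]) simp
  qed
qed

lemma exists_cut:
  fixes V :: "'a set" and ord :: "'a \<Rightarrow> nat"
  assumes fin: "finite V" and inj: "inj_on ord V" and m: "m \<le> card V"
  shows "\<exists>\<theta>. card {v \<in> V. ord v < \<theta>} = m"
proof -
  define f where "f t = card {v \<in> V. ord v < t}" for t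
  have f0: "f 0 = 0" unfolding f_def by simp
  have fs: "f (Suc t) \<le> Suc (f t)" for t
  proof -
    have eq: "{v \<in> V. ord v < Suc t} = {v \<in> V. ord v < t} \<union> {v \<in> V. ord v = t}" by auto
    have "card {v \<in> V. ord v = t} \<le> 1"
    proof -
      have "{v \<in> V. ord v = t} \<subseteq> {the_inv_into V ord t}"
        using inj by (auto simp: the_inv_into_f_f)
      then have "card {v \<in> V. ord v = t} \<le> card {the_inv_into V ord t}" by (rule card_mono[rotated]) simp
      then show ?thesis by simp
    qed
    moreover have "card ({v \<in> V. ord v < t} \<union> {v \<in> V. ord v = t}) \<le>
        card {v \<in> V. ord v < t} + card {v \<in> V. ord v = t}" by (rule card_Un_le)
    ultimately show ?thesis unfolding f_def eq by simp
  qed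
  define N where "N = Suc (Max (insert 0 (ord ` V)))"
  have "{v \<in> V. ord v < N} = V" unfolding N_def using fin
    by (auto simp: le_imp_less_Suc)
  then have "f N = card V" unfolding f_def by simp
  then show ?thesis using dIVT[of f m N] f0 fs m unfolding f_def by auto
qed

definition pre :: "nat \<Rightarrow> vert \<Rightarrow> vert" where
  "pre a v = (a # fst v, snd v)"

lemma pre_inj: "inj (pre a)"
  unfolding pre_def by (intro injI) (auto simp: prod_eq_iff)

lemma pre_Vs: "a < 3 \<Longrightarrow> v \<in> Vs K D \<Longrightarrow> pre a v \<in> Vs K (Suc D)"
  unfolding pre_def Vs_def Adr_def by auto

lemma pre_adj: "adj (pre a u) (pre a v) = adj u v"
  unfolding pre_def adj_def by auto

lemma sort3:
  fixes f :: "nat \<Rightarrow> nat"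
  shows "\<exists>a b c. a < 3 \<and> b < 3 \<and> c < 3 \<and> a \<noteq> b \<and> b \<noteq> c \<and> a \<noteq> c \<and> f a \<le> f b \<and> f b \<le> f c"
proof -
  have r: "\<exists>a b c. a < 3 \<and> b < 3 \<and> c < 3 \<and> a \<noteq> b \<and> b \<noteq> c \<and> a \<noteq> c \<and> f a \<le> f b \<and> f b \<le> f c"
    if "a < 3" "b < 3" "c < 3" "a \<noteq> b" "b \<noteq> c" "a \<noteq> c" "f a \<le> f b" "f b \<le> f c" for a b c
    using that by blast
  consider "f 0 \<le> f 1" "f 1 \<le> f 2" | "f 0 \<le> f 2" "f 2 \<le> f 1" | "f 1 \<le> f 0" "f 0 \<le> f 2"
    | "f 1 \<le> f 2" "f 2 \<le> f 0" | "f 2 \<le> f 0" "f 0 \<le> f 1" | "f 2 \<le> f 1" "f 1 \<le> f 0"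
    by linarith
  then show ?thesis
    by cases (rule r; simp; fail)+
qed

lemma card_Vs0: "card (Vs K 0) = K"
proof -
  have "Vs K 0 = (\<lambda>i. ([], i)) ` {0..<K}" unfolding Vs_def Adr_def by auto
  then show ?thesis by (simp add: card_image inj_on_def)
qed

lemma map_pre_cmatch:
  assumes P: "cmatch (ord \<circ> pre b) \<theta> (Vs K D) P" and b: "b < 3"
  shows "cmatch ord \<theta> (Vs K (Suc D)) ((\<lambda>(u, v). (pre b u, pre b v)) ` P)"
    and "card ((\<lambda>(u, v). (pre b u, pre b v)) ` P) = card P"
proof -
  let ?g = "\<lambda>(u, v). (pre b u, pre b v)"
  have ig: "inj ?g" using pre_inj[of b] unfolding inj_def by auto
  from P have P1: "finite P" "\<forall>(u, v)\<in>P. u \<in> Vs K D \<and> v \<in> Vs K D \<and> adj u v \<and> ord (pre b u) < \<theta> \<and> \<theta> \<le> ord (pre b v)"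
    "inj_on fst P" "inj_on snd P" unfolding cmatch_def by auto
  have "\<forall>(u, v)\<in>?g ` P. u \<in> Vs K (Suc D) \<and> v \<in> Vs K (Suc D) \<and> adj u v \<and> ord u < \<theta> \<and> \<theta> \<le> ord v"
    using P1(2) pre_Vs[OF b] pre_adj by auto
  moreover have "inj_on fst (?g ` P)"
  proof (rule inj_onI)
    fix x y assume "x \<in> ?g ` P" "y \<in> ?g ` P" "fst x = fst y"
    then obtain u v u' v' where "(u, v) \<in> P" "(u', v') \<in> P" "x = (pre b u, pre b v)" "y = (pre b u', pre b v')"
      "pre b u = pre b u'" by auto
    moreover from this have "u = u'" using pre_inj[of b] by (simp add: inj_eq)
    ultimately show "x = y" using inj_onD[OF P1(3), of "(u, v)" "(u', v')"] by simp
  qed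
  moreover have "inj_on snd (?g ` P)"
  proof (rule inj_onI)
    fix x y assume "x \<in> ?g ` P" "y \<in> ?g ` P" "snd x = snd y"
    then obtain u v u' v' where "(u, v) \<in> P" "(u', v') \<in> P" "x = (pre b u, pre b v)" "y = (pre b u', pre b v')"
      "pre b v = pre b v'" by auto
    moreover from this have "v = v'" using pre_inj[of b] by (simp add: inj_eq)
    ultimately show "x = y" using inj_onD[OF P1(4), of "(u, v)" "(u', v')"] by simp
  qed
  ultimately show "cmatch ord \<theta> (Vs K (Suc D)) (?g ` P)" using P1(1) unfolding cmatch_def by blast
  show "card (?g ` P) = card P" using ig by (simp add: card_image inj_on_subset)
qed

lemma count_pre:
  assumes b: "b < 3" and S: "S \<subseteq> Vs K (Suc D)"
    and sub: "\<And>v. v \<in> Vs K D \<Longrightarrow> Q (ord (pre b v)) \<Longrightarrow> pre b v \<in> S"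
    and c: "m \<le> card {v \<in> Vs K D. Q ((ord \<circ> pre b) v)}"
  shows "m \<le> card S"
proof -
  have "pre b ` {v \<in> Vs K D. Q ((ord \<circ> pre b) v)} \<subseteq> S" using sub by auto
  then have "card (pre b ` {v \<in> Vs K D. Q ((ord \<circ> pre b) v)}) \<le> card S"
    using finite_subset[OF S finite_Vs] by (intro card_mono) auto
  moreover have "card (pre b ` {v \<in> Vs K D. Q ((ord \<circ> pre b) v)}) = card {v \<in> Vs K D. Q ((ord \<circ> pre b) v)}"
    using pre_inj[of b] by (simp add: card_image inj_on_subset)
  ultimately show ?thesis using c by simp
qed

theorem main_comb:
  fixes ord :: "vert \<Rightarrow> nat"
  assumes m: "1 \<le> m"
  shows "inj_on ord (Vs (2*m) D) \<Longrightarrow> \<exists>\<theta> P. cmatch ord \<theta> (Vs (2*m) D) P \<and> m * D \<le> card P \<and>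
     m \<le> card {v \<in> Vs (2*m) D. ord v < \<theta>} \<and> m \<le> card {v \<in> Vs (2*m) D. \<theta> \<le> ord v}"
proof (induction D arbitrary: ord)
  case 0
  let ?V = "Vs (2*m) 0"
  obtain \<theta> where th: "card {v \<in> ?V. ord v < \<theta>} = m"
    using exists_cut[OF finite_Vs 0, of m] card_Vs0 by auto
  have "{v \<in> ?V. \<theta> \<le> ord v} = ?V - {v \<in> ?V. ord v < \<theta>}" by auto
  then have "card {v \<in> ?V. \<theta> \<le> ord v} = 2 * m - m"
    using th card_Vs0 finite_Vs by (simp add: card_Diff_subset)
  then show ?case using th by (intro exI[of _ \<theta>] exI[of _ "{}"]) (auto simp: cmatch_def)
next
  case (Suc D)
  define K where "K = 2 * m"
  define Q where "Q a \<theta> P \<longleftrightarrow> cmatch (ord \<circ> pre a) \<theta> (Vs K D) P \<and> m * D \<le> card P \<and>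
     m \<le> card {v \<in> Vs K D. (ord \<circ> pre a) v < \<theta>} \<and> m \<le> card {v \<in> Vs K D. \<theta> \<le> (ord \<circ> pre a) v}" for a \<theta> P
  have ex: "\<exists>\<theta> P. Q a \<theta> P" if a: "a < 3" for a
  proof -
    have "inj_on (ord \<circ> pre a) (Vs K D)"
    proof (rule comp_inj_on)
      show "inj_on (pre a) (Vs K D)" using pre_inj by (rule inj_on_subset) simp
      have "pre a ` Vs K D \<subseteq> Vs K (Suc D)" using pre_Vs[OF a] by auto
      then show "inj_on ord (pre a ` Vs K D)" using Suc.prems unfolding K_def
        by (meson inj_on_subset)
    qed
    then show ?thesis using Suc.IH unfolding Q_def K_def by blast
  qed
  define th where "th a = (SOME \<theta>. \<exists>P. Q a \<theta> P)" for a
  define PP where "PP a = (SOME P. Q a (th a) P)" for a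
  have QP: "Q a (th a) (PP a)" if "a < 3" for a
  proof -
    have "\<exists>P. Q a (th a) P" unfolding th_def using ex[OF that] by (rule someI_ex)
    then show ?thesis unfolding PP_def by (rule someI_ex)
  qed
  obtain a b c where abc: "a < 3" "b < 3" "c < 3" "a \<noteq> b" "b \<noteq> c" "a \<noteq> c" "th a \<le> th b" "th b \<le> th c"
    using sort3[of th] by blast
  let ?V = "Vs K (Suc D)"
  let ?g = "\<lambda>(u, v). (pre b u, pre b v)"
  define Pb where "Pb = ?g ` PP b"
  have Qb: "cmatch (ord \<circ> pre b) (th b) (Vs K D) (PP b)" "m * D \<le> card (PP b)"
    "m \<le> card {v \<in> Vs K D. (ord \<circ> pre b) v < th b}" "m \<le> card {v \<in> Vs K D. th b \<le> (ord \<circ> pre b) v}"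
    using QP[OF abc(2)] unfolding Q_def by auto
  have Pb: "cmatch ord (th b) ?V Pb" "card Pb = card (PP b)"
    using map_pre_cmatch[OF Qb(1) abc(2)] unfolding Pb_def by auto
  have Pb_addr: "\<forall>(u, v)\<in>Pb. fst u \<noteq> [] \<and> hd (fst u) = b \<and> fst v \<noteq> [] \<and> hd (fst v) = b"
    unfolding Pb_def pre_def by auto
  define W where "W = {w \<in> Adr (Suc D). w = [] \<or> hd w = a \<or> hd w = c}"
  define A where "A = {(w, i). w \<in> W \<and> i < K}"
  have AV: "A \<subseteq> ?V" unfolding A_def W_def Vs_def by auto
  have finA: "finite A" using finite_subset[OF AV finite_Vs] .
  have W0: "[] \<in> W" unfolding W_def Adr_def by simp
  have Wp: "\<And>w x. w @ [x] \<in> W \<Longrightarrow> x < 3 \<Longrightarrow> w \<in> W"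
  proof -
    fix w x assume "w @ [x] \<in> W" "x < 3"
    then show "w \<in> W" unfolding W_def Adr_def by (cases w) auto
  qed
  have Wa: "\<And>w. w \<in> W \<Longrightarrow> \<forall>x\<in>set w. x < 3"
    unfolding W_def Adr_def by auto
  have cL: "m \<le> card {x \<in> A - {}. ord x < th b}"
  proof (rule count_pre[OF abc(1), of _ K D "\<lambda>t. t < th a"])
    show "{x \<in> A - {}. ord x < th b} \<subseteq> ?V" using AV by auto
    show "pre a v \<in> {x \<in> A - {}. ord x < th b}" if "v \<in> Vs K D" "ord (pre a v) < th a" for v
      using that abc(1,7) unfolding A_def W_def pre_def Vs_def Adr_def by auto
    show "m \<le> card {v \<in> Vs K D. (ord \<circ> pre a) v < th a}" using QP[OF abc(1)] unfolding Q_def by auto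
  qed
  have cR: "m \<le> card {x \<in> A - {}. th b \<le> ord x}"
  proof (rule count_pre[OF abc(3), of _ K D "\<lambda>t. th c \<le> t"])
    show "{x \<in> A - {}. th b \<le> ord x} \<subseteq> ?V" using AV by auto
    show "pre c v \<in> {x \<in> A - {}. th b \<le> ord x}" if "v \<in> Vs K D" "th c \<le> ord (pre c v)" for v
      using that abc(3,8) unfolding A_def W_def pre_def Vs_def Adr_def by auto
    show "m \<le> card {v \<in> Vs K D. th c \<le> (ord \<circ> pre c) v}" using QP[OF abc(3)] unfolding Q_def by auto
  qed
  have "\<exists>P. cmatch ord (th b) (A - {}) P \<and> card P = m"
  proof (rule greedy[where W=W and A=A and K=K and C="{}" and j=m and ord=ord and \<theta>="th b"])
    show "\<And>w x. w @ [x] \<in> W \<Longrightarrow> x < 3 \<Longrightarrow> w \<in> W" by (rule Wp)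
  qed (use W0 Wa A_def finA cL cR in \<open>auto simp: K_def\<close>)
  then obtain P2 where P2: "cmatch ord (th b) (A - {}) P2" "card P2 = m" by blast
  have P2': "finite P2" "\<forall>(u, v)\<in>P2. u \<in> A \<and> v \<in> A \<and> adj u v \<and> ord u < th b \<and> th b \<le> ord v"
    "inj_on fst P2" "inj_on snd P2" using P2(1) unfolding cmatch_def by auto
  have Pb': "finite Pb" "\<forall>(u, v)\<in>Pb. u \<in> ?V \<and> v \<in> ?V \<and> adj u v \<and> ord u < th b \<and> th b \<le> ord v"
    "inj_on fst Pb" "inj_on snd Pb" using Pb(1) unfolding cmatch_def by auto
  have Aaddr: "fst x = [] \<or> hd (fst x) \<noteq> b" if "x \<in> A" for x
    using that abc unfolding A_def W_def by auto
  have dfst: "fst ` Pb \<inter> fst ` P2 = {}" using Pb_addr P2'(2) Aaddr by fastforce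
  have dsnd: "snd ` Pb \<inter> snd ` P2 = {}" using Pb_addr P2'(2) Aaddr by fastforce
  have disj: "Pb \<inter> P2 = {}" using dfst by auto
  define P where "P = Pb \<union> P2"
  have "cmatch ord (th b) ?V P"
  proof -
    have "\<forall>(u, v)\<in>P. u \<in> ?V \<and> v \<in> ?V \<and> adj u v \<and> ord u < th b \<and> th b \<le> ord v"
      using Pb'(2) P2'(2) AV unfolding P_def by blast
    moreover have "inj_on fst P" unfolding P_def using Pb'(3) P2'(3) dfst
      by (subst inj_on_Un) blast
    moreover have "inj_on snd P" unfolding P_def using Pb'(4) P2'(4) dsnd
      by (subst inj_on_Un) blast
    ultimately show ?thesis using Pb'(1) P2'(1) unfolding cmatch_def P_def by blast
  qed
  moreover have "m * Suc D \<le> card P"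
    unfolding P_def using card_Un_disjoint[OF Pb'(1) P2'(1) disj] Pb(2) Qb(2) P2(2) by simp
  moreover have "m \<le> card {v \<in> ?V. ord v < th b}"
  proof (rule count_pre[OF abc(2), of _ K D "\<lambda>t. t < th b"])
    show "\<And>v. v \<in> Vs K D \<Longrightarrow> ord (pre b v) < th b \<Longrightarrow> pre b v \<in> {v \<in> ?V. ord v < th b}"
      using pre_Vs[OF abc(2)] by auto
  qed (use Qb in auto)
  moreover have "m \<le> card {v \<in> ?V. th b \<le> ord v}"
  proof (rule count_pre[OF abc(2), of _ K D "\<lambda>t. th b \<le> t"])
    show "\<And>v. v \<in> Vs K D \<Longrightarrow> th b \<le> ord (pre b v) \<Longrightarrow> pre b v \<in> {v \<in> ?V. th b \<le> ord v}"
      using pre_Vs[OF abc(2)] by auto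
  qed (use Qb in auto)
  ultimately show ?case unfolding K_def by blast
qed

definition stepL :: "obdd \<Rightarrow> (var \<Rightarrow> nat) \<Rightarrow> nat \<Rightarrow> assignment \<Rightarrow> nat \<Rightarrow> nat \<Rightarrow> bool" where
  "stepL B ord \<theta> \<tau> u v \<longleftrightarrow> (\<exists>x l h. blab B u = Dec x l h \<and> ord x < \<theta> \<and> v = (if \<tau> x then h else l))"

definition frontier :: "obdd \<Rightarrow> (var \<Rightarrow> nat) \<Rightarrow> nat \<Rightarrow> nat \<Rightarrow> bool" where
  "frontier B ord \<theta> g \<longleftrightarrow> (case blab B g of Sink _ \<Rightarrow> True | Dec x _ _ \<Rightarrow> \<theta> \<le> ord x)"

lemma stepL_step: "stepL B ord \<theta> \<tau> u v \<Longrightarrow> obdd_step B \<tau> u v"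
  unfolding stepL_def obdd_step_def by blast

lemma stepL_rtc_step: "(stepL B ord \<theta> \<tau>)\<^sup>*\<^sup>* u v \<Longrightarrow> (obdd_step B \<tau>)\<^sup>*\<^sup>* u v"
  by (induction rule: rtranclp_induct) (auto intro: rtranclp.rtrancl_into_rtrancl stepL_step)

lemma stepL_cong:
  assumes "\<And>x. ord x < \<theta> \<Longrightarrow> \<tau> x = \<tau>' x"
  shows "stepL B ord \<theta> \<tau> = stepL B ord \<theta> \<tau>'"
  using assms unfolding stepL_def by (intro ext) auto

lemma step_det: "obdd_step B \<tau> u v \<Longrightarrow> obdd_step B \<tau> u v' \<Longrightarrow> v = v'"
  unfolding obdd_step_def by auto

lemma rtc_det:
  assumes det: "\<And>u v v'. R u v \<Longrightarrow> R u v' \<Longrightarrow> v = v'"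
  shows "R\<^sup>*\<^sup>* a b \<Longrightarrow> R\<^sup>*\<^sup>* a c \<Longrightarrow> R\<^sup>*\<^sup>* b c \<or> R\<^sup>*\<^sup>* c b"
proof (induction arbitrary: c rule: converse_rtranclp_induct)
  case base
  then show ?case by simp
next
  case (step a a')
  from step.prems show ?case
  proof (cases rule: converse_rtranclpE)
    case base
    then show ?thesis using step.hyps by (meson converse_rtranclp_into_rtranclp)
  next
    case (step a'')
    with det \<open>R a a'\<close> have "a'' = a'" by blast
    with step.IH[of c] \<open>R\<^sup>*\<^sup>* a'' c\<close> show ?thesis by blast
  qed
qed

lemma sink_no_step: "blab B v = Sink b \<Longrightarrow> \<not> obdd_step B \<tau> v w"
  unfolding obdd_step_def by auto

lemma rtc_from_sink: "(obdd_step B \<tau>)\<^sup>*\<^sup>* v g \<Longrightarrow> blab B v = Sink b \<Longrightarrow> g = v"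
  by (induction rule: converse_rtranclp_induct) (auto dest: sink_no_step)

lemma frontier_exists:
  "(obdd_step B \<tau>)\<^sup>*\<^sup>* u v \<Longrightarrow> blab B v = Sink b \<Longrightarrow>
   \<exists>g. (stepL B ord \<theta> \<tau>)\<^sup>*\<^sup>* u g \<and> frontier B ord \<theta> g \<and> (obdd_step B \<tau>)\<^sup>*\<^sup>* g v"
proof (induction rule: converse_rtranclp_induct)
  case base
  then show ?case unfolding frontier_def by auto
next
  case (step u u')
  show ?case
  proof (cases "frontier B ord \<theta> u")
    case True
    then show ?thesis using step by (meson converse_rtranclp_into_rtranclp rtranclp.rtrancl_refl)
  next
    case False
    from step.hyps(1) obtain x l h where xl: "blab B u = Dec x l h" "u' = (if \<tau> x then h else l)"
      unfolding obdd_step_def by auto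
    with False have "ord x < \<theta>" unfolding frontier_def by simp
    with xl have "stepL B ord \<theta> \<tau> u u'" unfolding stepL_def by blast
    with step.IH[OF step.prems] show ?thesis by (meson converse_rtranclp_into_rtranclp)
  qed
qed

definition obdd_wf :: "obdd \<Rightarrow> (var \<Rightarrow> nat) \<Rightarrow> bool" where
  "obdd_wf B ord \<longleftrightarrow> (\<forall>u\<in>bnodes B. case blab B u of
            Sink _ \<Rightarrow> True
          | Dec x l h \<Rightarrow> l \<in> bnodes B \<and> h \<in> bnodes B \<and>
                         obdd_below ord B x l \<and> obdd_below ord B x h)"

lemma rtc_closed: assumes "obdd_wf B ord" "(obdd_step B \<tau>)\<^sup>*\<^sup>* u v" "u \<in> bnodes B" shows "v \<in> bnodes B"
  using assms(2,3)
proof (induction rule: rtranclp_induct)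
  case (step y z)
  then show ?case using assms(1) unfolding obdd_wf_def obdd_step_def
    by (fastforce split: obdd_label.splits)
qed simp

lemma high_invariant:
  assumes wf: "obdd_wf B ord"
    and agree: "\<And>x. \<theta> \<le> ord x \<Longrightarrow> \<tau> x = \<tau>' x"
    and r: "(obdd_step B \<tau>)\<^sup>*\<^sup>* g v"
    and g: "g \<in> bnodes B" "frontier B ord \<theta> g"
  shows "(obdd_step B \<tau>')\<^sup>*\<^sup>* g v \<and> v \<in> bnodes B \<and> frontier B ord \<theta> v"
  using r
proof (induction rule: rtranclp_induct)
  case base
  then show ?case using g by simp
next
  case (step y z)
  then have y: "y \<in> bnodes B" "frontier B ord \<theta> y" "(obdd_step B \<tau>')\<^sup>*\<^sup>* g y" by auto
  from step.hyps(2) obtain x l h where yl: "blab B y = Dec x l h" and z: "z = (if \<tau> x then h else l)"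
    unfolding obdd_step_def by auto
  from y(2) yl have "\<theta> \<le> ord x" unfolding frontier_def by simp
  with agree have tx: "\<tau> x = \<tau>' x" by simp
  have s': "obdd_step B \<tau>' y z" using yl z tx unfolding obdd_step_def by auto
  from wf y(1) yl have lh: "l \<in> bnodes B" "h \<in> bnodes B" "obdd_below ord B x l" "obdd_below ord B x h"
    unfolding obdd_wf_def by (auto dest!: bspec)
  have zb: "z \<in> bnodes B" "obdd_below ord B x z" using lh z by auto
  have "frontier B ord \<theta> z" using zb(2) \<open>\<theta> \<le> ord x\<close>
    unfolding frontier_def obdd_below_def by (auto split: obdd_label.splits)
  then show ?case using y(3) s' zb(1) by (meson rtranclp.rtrancl_into_rtrancl)
qed

lemma accepts_via_frontier:
  assumes "(stepL B ord \<theta> \<tau>)\<^sup>*\<^sup>* (bsrc B) g" "frontier B ord \<theta> g"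
  shows "obdd_accepts B \<tau> \<longleftrightarrow> (\<exists>v. (obdd_step B \<tau>)\<^sup>*\<^sup>* g v \<and> blab B v = Sink True)"
proof
  have sg: "(obdd_step B \<tau>)\<^sup>*\<^sup>* (bsrc B) g" using assms(1) by (rule stepL_rtc_step)
  assume "obdd_accepts B \<tau>"
  then obtain v where v: "(obdd_step B \<tau>)\<^sup>*\<^sup>* (bsrc B) v" "blab B v = Sink True"
    unfolding obdd_accepts_def by auto
  from rtc_det[OF step_det sg v(1)] have "(obdd_step B \<tau>)\<^sup>*\<^sup>* g v \<or> (obdd_step B \<tau>)\<^sup>*\<^sup>* v g" .
  then have "(obdd_step B \<tau>)\<^sup>*\<^sup>* g v"
    using rtc_from_sink[OF _ v(2)] by auto
  then show "\<exists>v. (obdd_step B \<tau>)\<^sup>*\<^sup>* g v \<and> blab B v = Sink True" using v(2) by auto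
next
  have sg: "(obdd_step B \<tau>)\<^sup>*\<^sup>* (bsrc B) g" using assms(1) by (rule stepL_rtc_step)
  assume "\<exists>v. (obdd_step B \<tau>)\<^sup>*\<^sup>* g v \<and> blab B v = Sink True"
  then show "obdd_accepts B \<tau>" using sg unfolding obdd_accepts_def by (meson rtranclp_trans)
qed

lemma obdd_fooling:
  fixes I :: "'a set" and \<tau>s :: "'a set \<Rightarrow> 'a set \<Rightarrow> assignment"
  assumes fin: "finite (bnodes B)" and src: "bsrc B \<in> bnodes B"
    and wf: "obdd_wf B ord"
    and acc: "\<And>\<tau>. obdd_accepts B \<tau> \<longleftrightarrow> f \<tau>"
    and finI: "finite I"
    and low: "\<And>Z W W' x. ord x < \<theta> \<Longrightarrow> \<tau>s Z W x = \<tau>s Z W' x"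
    and high: "\<And>Z Z' W x. \<theta> \<le> ord x \<Longrightarrow> \<tau>s Z W x = \<tau>s Z' W x"
    and sem: "\<And>Z W. Z \<subseteq> I \<Longrightarrow> W \<subseteq> I \<Longrightarrow> f (\<tau>s Z W) \<longleftrightarrow> Z \<inter> W = {}"
  shows "2 ^ card I \<le> card (bnodes B)"
proof -
  define P where "P Z g \<longleftrightarrow> (stepL B ord \<theta> (\<tau>s Z {}))\<^sup>*\<^sup>* (bsrc B) g \<and> frontier B ord \<theta> g \<and> g \<in> bnodes B" for Z g
  have exP: "\<exists>g. P Z g" if "Z \<subseteq> I" for Z
  proof -
    have "f (\<tau>s Z {})" using sem[OF that] by simp
    with acc obtain v where v: "(obdd_step B (\<tau>s Z {}))\<^sup>*\<^sup>* (bsrc B) v" "blab B v = Sink True"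
      unfolding obdd_accepts_def by blast
    from frontier_exists[OF v, of ord \<theta>] obtain g where
      g: "(stepL B ord \<theta> (\<tau>s Z {}))\<^sup>*\<^sup>* (bsrc B) g" "frontier B ord \<theta> g" by blast
    have "g \<in> bnodes B" using rtc_closed[OF wf stepL_rtc_step[OF g(1)] src] .
    then show ?thesis using g unfolding P_def by blast
  qed
  define fr where "fr Z = (SOME g. P Z g)" for Z
  have frP: "P Z (fr Z)" if "Z \<subseteq> I" for Z
    unfolding fr_def using exP[OF that] by (rule someI_ex)
  have key: "i \<in> Z'" if Z: "Z \<subseteq> I" "Z' \<subseteq> I" and eq: "fr Z = fr Z'" and i: "i \<in> Z" for Z Z' i
  proof (rule ccontr)
    assume ni: "i \<notin> Z'"
    define g where "g = fr Z"
    have PZ: "P Z g" and PZ': "P Z' g" using frP[OF Z(1)] frP[OF Z(2)] eq unfolding g_def by auto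
    have iI: "i \<in> I" using Z i by auto
    let ?t1 = "\<tau>s Z {i}" and ?t2 = "\<tau>s Z' {i}"
    have r1: "(stepL B ord \<theta> ?t1)\<^sup>*\<^sup>* (bsrc B) g"
      using PZ unfolding P_def using stepL_cong[of ord \<theta> "\<tau>s Z {}" ?t1 B] low by metis
    have r2: "(stepL B ord \<theta> ?t2)\<^sup>*\<^sup>* (bsrc B) g"
      using PZ' unfolding P_def using stepL_cong[of ord \<theta> "\<tau>s Z' {}" ?t2 B] low by metis
    have fg: "frontier B ord \<theta> g" "g \<in> bnodes B" using PZ unfolding P_def by auto
    have "f ?t1 \<longleftrightarrow> (\<exists>v. (obdd_step B ?t1)\<^sup>*\<^sup>* g v \<and> blab B v = Sink True)"
      using accepts_via_frontier[OF r1 fg(1)] acc by simp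
    also have "\<dots> \<longleftrightarrow> (\<exists>v. (obdd_step B ?t2)\<^sup>*\<^sup>* g v \<and> blab B v = Sink True)"
    proof -
      have a: "\<And>x. \<theta> \<le> ord x \<Longrightarrow> ?t1 x = ?t2 x" using high by blast
      have b: "\<And>x. \<theta> \<le> ord x \<Longrightarrow> ?t2 x = ?t1 x" using high by blast
      have "(obdd_step B ?t2)\<^sup>*\<^sup>* g v" if "(obdd_step B ?t1)\<^sup>*\<^sup>* g v" for v
        using high_invariant[where \<tau>="?t1" and \<tau>'="?t2", OF wf a that fg(2,1)] by blast
      moreover have "(obdd_step B ?t1)\<^sup>*\<^sup>* g v" if "(obdd_step B ?t2)\<^sup>*\<^sup>* g v" for v
        using high_invariant[where \<tau>="?t2" and \<tau>'="?t1", OF wf b that fg(2,1)] by blast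
      ultimately show ?thesis by blast
    qed
    also have "\<dots> \<longleftrightarrow> f ?t2"
      using accepts_via_frontier[OF r2 fg(1)] acc by simp
    finally have "f ?t1 = f ?t2" .
    moreover have "\<not> f ?t1" using sem[OF Z(1)] iI i by auto
    moreover have "f ?t2" using sem[OF Z(2)] iI ni by auto
    ultimately show False by simp
  qed
  have inj: "inj_on fr (Pow I)"
  proof (rule inj_onI)
    fix Z Z' assume "Z \<in> Pow I" "Z' \<in> Pow I" "fr Z = fr Z'"
    then show "Z = Z'" using key[of Z Z'] key[of Z' Z] by auto
  qed
  have sub: "fr ` Pow I \<subseteq> bnodes B" using frP unfolding P_def by auto
  have "2 ^ card I = card (Pow I)" using finI by (simp add: card_Pow)
  also have "\<dots> = card (fr ` Pow I)" using inj by (simp add: card_image)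
  also have "\<dots> \<le> card (bnodes B)" using card_mono[OF fin sub] .
  finally show ?thesis .
qed

definition xv :: "vert \<Rightarrow> var" where "xv v = to_nat (Inl v :: vert + (vert \<times> vert))"
definition sv :: "vert \<times> vert \<Rightarrow> var" where "sv e = to_nat (Inr e :: vert + (vert \<times> vert))"

lemma xv_inj[simp]: "xv u = xv v \<longleftrightarrow> u = v" unfolding xv_def by simp
lemma sv_inj[simp]: "sv e = sv e' \<longleftrightarrow> e = e'" unfolding sv_def by simp
lemma xv_sv[simp]: "xv u \<noteq> sv e" "sv e \<noteq> xv u" unfolding xv_def sv_def by simp_all

fun addrs :: "nat \<Rightarrow> nat list list" where
  "addrs 0 = [[]]"
| "addrs (Suc D) = [] # concat (map (\<lambda>a. map (Cons a) (addrs D)) [0, 1, 2])"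

lemma set_addrs: "set (addrs D) = Adr D"
proof (induction D)
  case 0 then show ?case unfolding Adr_def by auto
next
  case (Suc D)
  show ?case
  proof (rule set_eqI)
    fix w
    show "w \<in> set (addrs (Suc D)) \<longleftrightarrow> w \<in> Adr (Suc D)"
      using Suc unfolding Adr_def
      by (cases w) (auto simp: less_Suc_eq numeral_3_eq_3)
  qed
qed

definition cl_edges :: "nat \<Rightarrow> nat list \<Rightarrow> (vert \<times> vert) list" where
  "cl_edges K w = [((w, i), (w, j)). i \<leftarrow> [0..<K], j \<leftarrow> [0..<K], i < j]"
definition mt_edges :: "nat \<Rightarrow> nat list \<Rightarrow> (vert \<times> vert) list" where
  "mt_edges K w = [((w, i), (w @ [a], i)). a \<leftarrow> [0..<3], i \<leftarrow> [0..<K]]"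

definition edges :: "nat \<Rightarrow> nat \<Rightarrow> (vert \<times> vert) list" where
  "edges K D = concat (map (\<lambda>w. cl_edges K w @ (if length w < D then mt_edges K w else [])) (addrs D))"

definition Eset :: "nat \<Rightarrow> nat \<Rightarrow> (vert \<times> vert) set" where
  "Eset K D = {(u, v). u \<in> Vs K D \<and> v \<in> Vs K D \<and>
     ((fst u = fst v \<and> snd u < snd v) \<or> (snd u = snd v \<and> (\<exists>a<3. fst v = fst u @ [a])))}"

lemma set_L1: "set (cl_edges K w) =
   {((w, i), (w, j)) | i j. i < j \<and> j < K}"
proof -
  have "set (cl_edges K w) =
      (\<Union>i\<in>{0..<K}. \<Union>j\<in>{0..<K}. if i < j then {((w, i), (w, j))} else {})"
    unfolding cl_edges_def by (simp add: set_concat)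
  also have "\<dots> = {((w, i), (w, j)) | i j. i < j \<and> j < K}" by (auto split: if_splits)
  finally show ?thesis .
qed

lemma set_L2: "set (mt_edges K w) =
   {((w, i), (w @ [a], i)) | a i. a < 3 \<and> i < K}"
proof -
  have "set (mt_edges K w) =
      (\<Union>a\<in>{0..<3}. (\<lambda>i. ((w, i), (w @ [a], i))) ` {0..<K})"
    unfolding mt_edges_def by (simp add: set_concat)
  also have "\<dots> = {((w, i), (w @ [a], i)) | a i. a < 3 \<and> i < K}" by auto
  finally show ?thesis .
qed

lemma Adr_snoc: "w @ [a] \<in> Adr D \<longleftrightarrow> w \<in> Adr D \<and> length w < D \<and> a < 3"
  unfolding Adr_def by auto

lemma set_edges: "set (edges K D) = Eset K D"
proof -
  have "set (edges K D) = (\<Union>w\<in>Adr D. {((w, i), (w, j)) | i j. i < j \<and> j < K} \<union>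
      (if length w < D then {((w, i), (w @ [a], i)) | a i. a < 3 \<and> i < K} else {}))"
    unfolding edges_def by (auto simp: set_addrs set_L1 set_L2 split: if_splits)
  also have "\<dots> = Eset K D"
  proof (rule set_eqI)
    fix e :: "vert \<times> vert"
    obtain w i w' j where e: "e = ((w, i), (w', j))" by (metis prod.exhaust)
    show "e \<in> (\<Union>w\<in>Adr D. {((w, i), (w, j)) | i j. i < j \<and> j < K} \<union>
      (if length w < D then {((w, i), (w @ [a], i)) | a i. a < 3 \<and> i < K} else {})) \<longleftrightarrow> e \<in> Eset K D"
    proof
      assume "e \<in> (\<Union>w\<in>Adr D. {((w, i), (w, j)) | i j. i < j \<and> j < K} \<union>
        (if length w < D then {((w, i), (w @ [a], i)) | a i. a < 3 \<and> i < K} else {}))"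
      then obtain v where v: "v \<in> Adr D" "e \<in> {((v, i), (v, j)) | i j. i < j \<and> j < K} \<union>
        (if length v < D then {((v, i), (v @ [a], i)) | a i. a < 3 \<and> i < K} else {})" by blast
      then consider "w = v" "w' = v" "i < j" "j < K"
        | a where "length v < D" "w = v" "w' = v @ [a]" "i = j" "a < 3" "i < K"
        using e by (auto split: if_splits)
      then show "e \<in> Eset K D"
      proof cases
        case 1 then show ?thesis using v(1) e unfolding Eset_def Vs_def by auto
      next
        case (2 a)
        then have "w' \<in> Adr D" using v(1) Adr_snoc by simp
        then show ?thesis using 2 v(1) e unfolding Eset_def Vs_def by auto
      qed
    next
      assume "e \<in> Eset K D"
      then have h: "w \<in> Adr D" "i < K" "w' \<in> Adr D" "j < K"
        "(w = w' \<and> i < j) \<or> (i = j \<and> (\<exists>a<3. w' = w @ [a]))"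
        unfolding Eset_def Vs_def e by auto
      show "e \<in> (\<Union>w\<in>Adr D. {((w, i), (w, j)) | i j. i < j \<and> j < K} \<union>
        (if length w < D then {((w, i), (w @ [a], i)) | a i. a < 3 \<and> i < K} else {}))"
      proof (cases "w = w' \<and> i < j")
        case True then show ?thesis using h e by (intro UN_I[of w]) auto
      next
        case False
        then obtain a where a: "i = j" "a < 3" "w' = w @ [a]" using h(5) by blast
        then have "length w < D" using h(3) Adr_snoc by simp
        then show ?thesis using h e a by (intro UN_I[of w]) auto
      qed
    qed
  qed
  finally show ?thesis .
qed

definition clause_of :: "vert \<times> vert \<Rightarrow> clause" where
  "clause_of e = [(xv (fst e), True), (xv (snd e), True), (sv e, True)]"

definition Fk :: "nat \<Rightarrow> nat \<Rightarrow> cnf" where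
  "Fk K D = map clause_of (edges K D)"

lemma cnf_sem_Fk: "cnf_sem (Fk K D) \<tau> \<longleftrightarrow> (\<forall>e\<in>Eset K D. \<tau> (xv (fst e)) \<or> \<tau> (xv (snd e)) \<or> \<tau> (sv e))"
  unfolding cnf_sem_def Fk_def clause_of_def set_edges[symmetric] by auto

lemma adj_E: "u \<in> Vs K D \<Longrightarrow> v \<in> Vs K D \<Longrightarrow> adj u v \<Longrightarrow> (u, v) \<in> Eset K D \<or> (v, u) \<in> Eset K D"
  unfolding adj_def Eset_def by (auto simp: nat_neq_iff)

lemma vars_Fk: "cnf_vars (Fk K D) = xv ` (fst ` Eset K D \<union> snd ` Eset K D) \<union> sv ` Eset K D"
  unfolding cnf_vars_def Fk_def clause_of_def set_edges[symmetric] by auto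

lemma Vs_in_E: assumes "2 \<le> K" "v \<in> Vs K D" shows "v \<in> fst ` Eset K D \<union> snd ` Eset K D"
proof -
  obtain w i where v: "v = (w, i)" "w \<in> Adr D" "i < K" using assms(2) unfolding Vs_def by auto
  show ?thesis
  proof (cases "i = 0")
    case True
    then have "(v, (w, 1)) \<in> Eset K D" using v assms(1) unfolding Eset_def Vs_def by auto
    then show ?thesis by force
  next
    case False
    then have "((w, 0), v) \<in> Eset K D" using v assms(1) unfolding Eset_def Vs_def by auto
    then show ?thesis by force
  qed
qed

lemma vars_Fk2: "2 \<le> K \<Longrightarrow> cnf_vars (Fk K D) = xv ` Vs K D \<union> sv ` Eset K D"
  unfolding vars_Fk using Vs_in_E[of K _ D] by (auto simp: Eset_def)

theorem obdd_lower:
  assumes m: "1 \<le> m" and B: "is_obdd B (cnf_vars (Fk (2*m) D))"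
    and acc: "\<And>\<tau>. obdd_accepts B \<tau> \<longleftrightarrow> cnf_sem (Fk (2*m) D) \<tau>"
  shows "2 ^ (m * D) \<le> obdd_size B"
proof -
  let ?K = "2*m"
  let ?X = "cnf_vars (Fk ?K D)"
  from B obtain ord where fin: "finite (bnodes B)" and src: "bsrc B \<in> bnodes B" and inj: "inj_on ord ?X"
    and wf0: "\<forall>u\<in>bnodes B. case blab B u of Sink _ \<Rightarrow> True
          | Dec x l h \<Rightarrow> x \<in> ?X \<and> l \<in> bnodes B \<and> h \<in> bnodes B \<and> obdd_below ord B x l \<and> obdd_below ord B x h"
    unfolding is_obdd_def by blast
  have wf: "obdd_wf B ord" unfolding obdd_wf_def
  proof
    fix u assume "u \<in> bnodes B"
    then show "case blab B u of Sink _ \<Rightarrow> True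
          | Dec x l h \<Rightarrow> l \<in> bnodes B \<and> h \<in> bnodes B \<and> obdd_below ord B x l \<and> obdd_below ord B x h"
    proof -
      have "case blab B u of Sink _ \<Rightarrow> True
          | Dec x l h \<Rightarrow> x \<in> ?X \<and> l \<in> bnodes B \<and> h \<in> bnodes B \<and> obdd_below ord B x l \<and> obdd_below ord B x h"
        using wf0 \<open>u \<in> bnodes B\<close> by blast
      then show ?thesis by (cases "blab B u") simp_all
    qed
  qed
  have XV: "xv ` Vs ?K D \<subseteq> ?X" using vars_Fk2[of ?K D] m by auto
  have inj': "inj_on (ord \<circ> xv) (Vs ?K D)"
  proof (rule comp_inj_on)
    show "inj_on xv (Vs ?K D)" by (simp add: inj_on_def)
    show "inj_on ord (xv ` Vs ?K D)" using inj XV by (rule inj_on_subset)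
  qed
  obtain \<theta> P where P: "cmatch (ord \<circ> xv) \<theta> (Vs ?K D) P" "m * D \<le> card P"
    using main_comb[OF m inj'] by blast
  have P1: "finite P" "\<And>u v. (u, v) \<in> P \<Longrightarrow> u \<in> Vs ?K D \<and> v \<in> Vs ?K D \<and> adj u v \<and> ord (xv u) < \<theta> \<and> \<theta> \<le> ord (xv v)"
    "inj_on fst P" "inj_on snd P" using P(1) unfolding cmatch_def by auto
  define \<tau>s where "\<tau>s Z W x \<longleftrightarrow> \<not> ((\<exists>p\<in>Z \<inter> P. x = xv (fst p)) \<or> (\<exists>p\<in>W \<inter> P. x = xv (snd p)) \<or>
      (\<exists>p\<in>P. x = sv p \<or> x = sv (snd p, fst p)))" for Z W :: "(vert \<times> vert) set" and x
  have low: "\<tau>s Z W x = \<tau>s Z W' x" if "ord x < \<theta>" for Z W W' x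
  proof -
    have "\<not> (\<exists>p\<in>W \<inter> P. x = xv (snd p))" "\<not> (\<exists>p\<in>W' \<inter> P. x = xv (snd p))"
      using P1(2) \<open>ord x < \<theta>\<close> by (fastforce simp: not_less[symmetric])+
    then show ?thesis unfolding \<tau>s_def by blast
  qed
  have high: "\<tau>s Z W x = \<tau>s Z' W x" if "\<theta> \<le> ord x" for Z Z' W x
  proof -
    have "\<not> (\<exists>p\<in>Z \<inter> P. x = xv (fst p))" "\<not> (\<exists>p\<in>Z' \<inter> P. x = xv (fst p))"
      using P1(2) \<open>\<theta> \<le> ord x\<close> by (fastforce simp: not_less[symmetric])+
    then show ?thesis unfolding \<tau>s_def by blast
  qed
  have tfst: "\<tau>s Z W (xv (fst p)) \<longleftrightarrow> p \<notin> Z" if p: "p \<in> P" for Z W p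
  proof -
    have A: "(\<exists>q\<in>Z \<inter> P. xv (fst p) = xv (fst q)) \<longleftrightarrow> p \<in> Z"
      using P1(3) p unfolding inj_on_def by auto
    have B: "\<not> (\<exists>q\<in>W \<inter> P. xv (fst p) = xv (snd q))"
    proof
      assume "\<exists>q\<in>W \<inter> P. xv (fst p) = xv (snd q)"
      then obtain q where q: "q \<in> P" "fst p = snd q" by auto
      have "ord (xv (fst p)) < \<theta>" using P1(2)[of "fst p" "snd p"] p by simp
      moreover have "\<theta> \<le> ord (xv (snd q))" using P1(2)[of "fst q" "snd q"] q by simp
      ultimately show False using q by simp
    qed
    show ?thesis unfolding \<tau>s_def using A B by auto
  qed
  have tsnd: "\<tau>s Z W (xv (snd p)) \<longleftrightarrow> p \<notin> W" if p: "p \<in> P" for Z W p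
  proof -
    have A: "(\<exists>q\<in>W \<inter> P. xv (snd p) = xv (snd q)) \<longleftrightarrow> p \<in> W"
      using P1(4) p unfolding inj_on_def by auto
    have B: "\<not> (\<exists>q\<in>Z \<inter> P. xv (snd p) = xv (fst q))"
    proof
      assume "\<exists>q\<in>Z \<inter> P. xv (snd p) = xv (fst q)"
      then obtain q where q: "q \<in> P" "snd p = fst q" by auto
      have "\<theta> \<le> ord (xv (snd p))" using P1(2)[of "fst p" "snd p"] p by simp
      moreover have "ord (xv (fst q)) < \<theta>" using P1(2)[of "fst q" "snd q"] q by simp
      ultimately show False using q by simp
    qed
    show ?thesis unfolding \<tau>s_def using A B by auto
  qed
  have tsv: "\<tau>s Z W (sv e) \<longleftrightarrow> \<not> (\<exists>p\<in>P. e = p \<or> e = (snd p, fst p))" for Z W e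
    unfolding \<tau>s_def by auto
  have sem: "cnf_sem (Fk ?K D) (\<tau>s Z W) \<longleftrightarrow> Z \<inter> W = {}" if ZW: "Z \<subseteq> P" "W \<subseteq> P" for Z W
  proof
    assume c: "cnf_sem (Fk ?K D) (\<tau>s Z W)"
    show "Z \<inter> W = {}"
    proof (rule ccontr)
      assume "Z \<inter> W \<noteq> {}"
      then obtain p where p: "p \<in> Z" "p \<in> W" by auto
      then have pP: "p \<in> P" using ZW by auto
      obtain u v where uv: "p = (u, v)" by (cases p)
      have "u \<in> Vs ?K D" "v \<in> Vs ?K D" "adj u v" using P1(2) pP uv by auto
      then have "(u, v) \<in> Eset ?K D \<or> (v, u) \<in> Eset ?K D" by (rule adj_E)
      then show False
      proof
        assume e: "(u, v) \<in> Eset ?K D"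
        have "\<exists>p'\<in>P. (u, v) = p' \<or> (u, v) = (snd p', fst p')" using pP uv by (intro bexI[of _ p]) auto
        then have "\<not> \<tau>s Z W (sv (u, v))" using tsv by simp
        moreover have "\<not> \<tau>s Z W (xv u)" "\<not> \<tau>s Z W (xv v)"
          using tfst[OF pP] tsnd[OF pP] p uv by auto
        ultimately show False using c e unfolding cnf_sem_Fk by fastforce
      next
        assume e: "(v, u) \<in> Eset ?K D"
        have "\<exists>p'\<in>P. (v, u) = p' \<or> (v, u) = (snd p', fst p')" using pP uv by (intro bexI[of _ p]) auto
        then have "\<not> \<tau>s Z W (sv (v, u))" using tsv by simp
        moreover have "\<not> \<tau>s Z W (xv u)" "\<not> \<tau>s Z W (xv v)"
          using tfst[OF pP] tsnd[OF pP] p uv by auto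
        ultimately show False using c e unfolding cnf_sem_Fk by fastforce
      qed
    qed
  next
    assume d: "Z \<inter> W = {}"
    show "cnf_sem (Fk ?K D) (\<tau>s Z W)" unfolding cnf_sem_Fk
    proof
      fix e assume "e \<in> Eset ?K D"
      show "\<tau>s Z W (xv (fst e)) \<or> \<tau>s Z W (xv (snd e)) \<or> \<tau>s Z W (sv e)"
      proof (cases "\<tau>s Z W (sv e)")
        case False
        then obtain p where pP: "p \<in> P" and e: "e = p \<or> e = (snd p, fst p)" using tsv by blast
        have "p \<notin> Z \<or> p \<notin> W" using d by auto
        then have "\<tau>s Z W (xv (fst p)) \<or> \<tau>s Z W (xv (snd p))" using tfst[OF pP] tsnd[OF pP] by auto
        then show ?thesis using e by auto
      qed simp
    qed
  qed
  have "2 ^ card P \<le> card (bnodes B)"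
  proof (rule obdd_fooling[OF fin src wf acc P1(1)])
    show "\<And>Z W W' x. ord x < \<theta> \<Longrightarrow> \<tau>s Z W x = \<tau>s Z W' x" by (rule low)
    show "\<And>Z Z' W x. \<theta> \<le> ord x \<Longrightarrow> \<tau>s Z W x = \<tau>s Z' W x" by (rule high)
    show "\<And>Z W. Z \<subseteq> P \<Longrightarrow> W \<subseteq> P \<Longrightarrow> cnf_sem (Fk ?K D) (\<tau>s Z W) \<longleftrightarrow> Z \<inter> W = {}" by (rule sem)
  qed
  moreover have "(2::nat) ^ (m * D) \<le> 2 ^ card P" using P(2) by (simp add: power_increasing)
  ultimately show ?thesis unfolding obdd_size_def by linarith
qed

instance vtree :: countable by countable_datatype

context
  fixes F :: cnf
begin

definition XT :: "vtree \<Rightarrow> var set" where "XT t = set (vt_leaves t)"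
definition cvars :: "clause \<Rightarrow> var set" where "cvars C = fst ` set C"
definition Icr :: "vtree \<Rightarrow> clause set" where
  "Icr t = {C \<in> set F. cvars C \<inter> XT t \<noteq> {} \<and> \<not> cvars C \<subseteq> XT t}"
definition sat_in :: "vtree \<Rightarrow> assignment \<Rightarrow> clause \<Rightarrow> bool" where
  "sat_in t \<tau> C \<longleftrightarrow> (\<exists>(x, b)\<in>set C. x \<in> XT t \<and> \<tau> x = b)"
definition Sat :: "vtree \<Rightarrow> assignment \<Rightarrow> clause set" where
  "Sat t \<tau> = {C \<in> Icr t. sat_in t \<tau> C}"
definition internal :: "vtree \<Rightarrow> assignment \<Rightarrow> bool" where
  "internal t \<tau> \<longleftrightarrow> (\<forall>C\<in>set F. cvars C \<subseteq> XT t \<longrightarrow> (\<exists>(x, b)\<in>set C. \<tau> x = b))"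
definition Nset :: "vtree \<Rightarrow> clause set set" where
  "Nset t = range (Sat t)"
definition bd :: "vtree \<Rightarrow> var set" where
  "bd t = {x \<in> XT t. \<exists>C\<in>Icr t. x \<in> cvars C}"

definition enc :: "vtree \<Rightarrow> clause set \<Rightarrow> nat" where
  "enc t S = to_nat (t, filter (\<lambda>C. C \<in> S) F)"
definition dvt :: "nat \<Rightarrow> vtree" where "dvt g = fst (from_nat g :: vtree \<times> clause list)"
definition dS :: "nat \<Rightarrow> clause set" where "dS g = set (snd (from_nat g :: vtree \<times> clause list))"

lemma dvt_enc[simp]: "dvt (enc t S) = t" unfolding dvt_def enc_def by simp
lemma dS_enc[simp]: "S \<subseteq> set F \<Longrightarrow> dS (enc t S) = S" unfolding dS_def enc_def by auto

lemma enc_inj: "S \<subseteq> set F \<Longrightarrow> S' \<subseteq> set F \<Longrightarrow> enc t S = enc t' S' \<longleftrightarrow> t = t' \<and> S = S'"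
  by (metis dS_enc dvt_enc)

lemma Icr_F: "Icr t \<subseteq> set F" unfolding Icr_def by auto
lemma Sat_F: "Sat t \<tau> \<subseteq> set F" unfolding Sat_def using Icr_F by auto
lemma Nset_F: "S \<in> Nset t \<Longrightarrow> S \<subseteq> set F" unfolding Nset_def using Sat_F by auto

definition leaf_ok :: "vtree \<Rightarrow> clause set \<Rightarrow> bool \<Rightarrow> bool" where
  "leaf_ok t S b \<longleftrightarrow> internal t (\<lambda>_. b) \<and> Sat t (\<lambda>_. b) = S"

definition lab_of :: "vtree \<Rightarrow> clause set \<Rightarrow> leaf_label" where
  "lab_of t S = (if leaf_ok t S True \<and> leaf_ok t S False then LConst True
     else if leaf_ok t S True then LPos else if leaf_ok t S False then LNeg else LConst False)"

definition tcond :: "vtree \<Rightarrow> vtree \<Rightarrow> clause set \<Rightarrow> clause set \<Rightarrow> clause set \<Rightarrow> bool" where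
  "tcond t1 t2 S S1 S2 \<longleftrightarrow>
     (\<forall>C\<in>set F. cvars C \<subseteq> XT t1 \<union> XT t2 \<and> \<not> cvars C \<subseteq> XT t1 \<and> \<not> cvars C \<subseteq> XT t2 \<longrightarrow> C \<in> S1 \<union> S2) \<and>
     (S1 \<union> S2) \<inter> Icr (VNode t1 t2) = S"

definition tin_of :: "vtree \<Rightarrow> clause set \<Rightarrow> (nat \<times> nat) set" where
  "tin_of t S = (case t of VLeaf _ \<Rightarrow> {}
     | VNode t1 t2 \<Rightarrow> {(enc t1 S1, enc t2 S2) | S1 S2. S1 \<in> Nset t1 \<and> S2 \<in> Nset t2 \<and> tcond t1 t2 S S1 S2})"

definition Keys :: "vtree \<Rightarrow> (vtree \<times> clause set) set" where
  "Keys T = {(t, S). t \<in> vt_subtrees T \<and> S \<in> Nset t}"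

definition mk :: "vtree \<Rightarrow> tdd" where
  "mk T = \<lparr> tnodes = (\<lambda>(t, S). enc t S) ` Keys T,
            tvt = dvt,
            tlab = (\<lambda>g. lab_of (dvt g) (dS g)),
            tin = (\<lambda>g. tin_of (dvt g) (dS g)),
            tout = enc T {} \<rparr>"

definition fsem :: "vtree \<Rightarrow> clause set \<Rightarrow> assignment \<Rightarrow> bool" where
  "fsem t S \<tau> \<longleftrightarrow> internal t \<tau> \<and> Sat t \<tau> = S"

lemma XT_node: "XT (VNode t1 t2) = XT t1 \<union> XT t2" unfolding XT_def by simp

lemma leaf_dep:
  "internal (VLeaf x) \<tau> = internal (VLeaf x) (\<lambda>_. \<tau> x)" "Sat (VLeaf x) \<tau> = Sat (VLeaf x) (\<lambda>_. \<tau> x)"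
proof -
  show "internal (VLeaf x) \<tau> = internal (VLeaf x) (\<lambda>_. \<tau> x)"
  proof -
    have yx: "y = x" if "(y, b) \<in> set C" "cvars C \<subseteq> XT (VLeaf x)" for y b C
      using that unfolding cvars_def XT_def by force
    have "(\<exists>(y, b)\<in>set C. \<tau> y = b) \<longleftrightarrow> (\<exists>(y, b)\<in>set C. (\<lambda>_. \<tau> x) y = b)"
      if cx: "cvars C \<subseteq> XT (VLeaf x)" for C
    proof
      assume "\<exists>(y, b)\<in>set C. \<tau> y = b"
      then obtain y b where h: "(y, b) \<in> set C" "\<tau> y = b" by blast
      have "y = x" using yx[OF h(1) cx] .
      then show "\<exists>(y, b)\<in>set C. (\<lambda>_. \<tau> x) y = b" using h by (intro bexI[of _ "(y, b)"]) auto
    next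
      assume "\<exists>(y, b)\<in>set C. (\<lambda>_. \<tau> x) y = b"
      then obtain y b where h: "(y, b) \<in> set C" "\<tau> x = b" by blast
      have "y = x" using yx[OF h(1) cx] .
      then show "\<exists>(y, b)\<in>set C. \<tau> y = b" using h by (intro bexI[of _ "(y, b)"]) auto
    qed
    then show ?thesis unfolding internal_def by simp
  qed
  show "Sat (VLeaf x) \<tau> = Sat (VLeaf x) (\<lambda>_. \<tau> x)"
    unfolding Sat_def sat_in_def XT_def by auto
qed

lemma fsem_leaf: "fsem (VLeaf x) S \<tau> \<longleftrightarrow> leaf_ok (VLeaf x) S (\<tau> x)"
  unfolding fsem_def leaf_ok_def using leaf_dep by metis

lemma internal_node:
  "internal (VNode t1 t2) \<tau> \<longleftrightarrow> internal t1 \<tau> \<and> internal t2 \<tau> \<and>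
     (\<forall>C\<in>set F. cvars C \<subseteq> XT t1 \<union> XT t2 \<and> \<not> cvars C \<subseteq> XT t1 \<and> \<not> cvars C \<subseteq> XT t2 \<longrightarrow> C \<in> Sat t1 \<tau> \<union> Sat t2 \<tau>)"
proof
  assume I: "internal (VNode t1 t2) \<tau>"
  have "internal t1 \<tau>" "internal t2 \<tau>" using I unfolding internal_def XT_node by auto
  moreover have "C \<in> Sat t1 \<tau> \<union> Sat t2 \<tau>"
    if C: "C \<in> set F" "cvars C \<subseteq> XT t1 \<union> XT t2" "\<not> cvars C \<subseteq> XT t1" "\<not> cvars C \<subseteq> XT t2" for C
  proof -
    obtain x b where xb: "(x, b) \<in> set C" "\<tau> x = b" using I C unfolding internal_def XT_node by blast
    have xin: "x \<in> XT t1 \<union> XT t2" using xb C(2) unfolding cvars_def by force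
    have i1: "C \<in> Icr t1" "C \<in> Icr t2" using C unfolding Icr_def by auto
    show ?thesis using xin xb i1 unfolding Sat_def sat_in_def by auto
  qed
  ultimately show "internal t1 \<tau> \<and> internal t2 \<tau> \<and>
     (\<forall>C\<in>set F. cvars C \<subseteq> XT t1 \<union> XT t2 \<and> \<not> cvars C \<subseteq> XT t1 \<and> \<not> cvars C \<subseteq> XT t2 \<longrightarrow> C \<in> Sat t1 \<tau> \<union> Sat t2 \<tau>)"
    by blast
next
  assume H: "internal t1 \<tau> \<and> internal t2 \<tau> \<and>
     (\<forall>C\<in>set F. cvars C \<subseteq> XT t1 \<union> XT t2 \<and> \<not> cvars C \<subseteq> XT t1 \<and> \<not> cvars C \<subseteq> XT t2 \<longrightarrow> C \<in> Sat t1 \<tau> \<union> Sat t2 \<tau>)"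
  show "internal (VNode t1 t2) \<tau>" unfolding internal_def XT_node
  proof (intro ballI impI)
    fix C assume C: "C \<in> set F" "cvars C \<subseteq> XT t1 \<union> XT t2"
    show "\<exists>(x, b)\<in>set C. \<tau> x = b"
    proof (cases "cvars C \<subseteq> XT t1 \<or> cvars C \<subseteq> XT t2")
      case True
      then show ?thesis using H C unfolding internal_def by blast
    next
      case False
      then have "C \<in> Sat t1 \<tau> \<union> Sat t2 \<tau>" using H C by blast
      then show ?thesis unfolding Sat_def sat_in_def by auto
    qed
  qed
qed

lemma Sat_node: "Sat (VNode t1 t2) \<tau> = (Sat t1 \<tau> \<union> Sat t2 \<tau>) \<inter> Icr (VNode t1 t2)"
proof (rule set_eqI)
  fix C
  show "C \<in> Sat (VNode t1 t2) \<tau> \<longleftrightarrow> C \<in> (Sat t1 \<tau> \<union> Sat t2 \<tau>) \<inter> Icr (VNode t1 t2)"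
  proof
    assume C: "C \<in> Sat (VNode t1 t2) \<tau>"
    then have CI: "C \<in> Icr (VNode t1 t2)" and s: "sat_in (VNode t1 t2) \<tau> C" unfolding Sat_def by auto
    from s obtain x b where xb: "(x, b) \<in> set C" "x \<in> XT t1 \<union> XT t2" "\<tau> x = b"
      unfolding sat_in_def XT_node by auto
    have xc: "x \<in> cvars C" using xb(1) unfolding cvars_def by force
    have "\<not> cvars C \<subseteq> XT t1" "\<not> cvars C \<subseteq> XT t2" using CI unfolding Icr_def XT_node by auto
    then have "C \<in> Sat t1 \<tau> \<or> C \<in> Sat t2 \<tau>"
      using xb xc CI unfolding Sat_def sat_in_def Icr_def by auto
    then show "C \<in> (Sat t1 \<tau> \<union> Sat t2 \<tau>) \<inter> Icr (VNode t1 t2)" using CI by auto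
  next
    assume "C \<in> (Sat t1 \<tau> \<union> Sat t2 \<tau>) \<inter> Icr (VNode t1 t2)"
    then show "C \<in> Sat (VNode t1 t2) \<tau>" unfolding Sat_def sat_in_def XT_node by auto
  qed
qed

lemma eval_mk: "S \<subseteq> set F \<Longrightarrow> tdd_eval (mk T) t (enc t S) \<tau> \<longleftrightarrow> fsem t S \<tau>"
proof (induction t arbitrary: S)
  case (VLeaf x)
  show ?case unfolding fsem_leaf using VLeaf.prems
    by (cases "\<tau> x") (auto simp: mk_def lab_of_def)
next
  case (VNode t1 t2)
  have "tdd_eval (mk T) (VNode t1 t2) (enc (VNode t1 t2) S) \<tau> \<longleftrightarrow>
     (\<exists>S1 S2. S1 \<in> Nset t1 \<and> S2 \<in> Nset t2 \<and> tcond t1 t2 S S1 S2 \<and> fsem t1 S1 \<tau> \<and> fsem t2 S2 \<tau>)"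
  proof -
    have tin: "tin (mk T) (enc (VNode t1 t2) S) = {(enc t1 S1, enc t2 S2) | S1 S2. S1 \<in> Nset t1 \<and> S2 \<in> Nset t2 \<and> tcond t1 t2 S S1 S2}"
      using VNode.prems by (simp add: mk_def tin_of_def)
    have "tdd_eval (mk T) (VNode t1 t2) (enc (VNode t1 t2) S) \<tau> \<longleftrightarrow>
      (\<exists>S1 S2. S1 \<in> Nset t1 \<and> S2 \<in> Nset t2 \<and> tcond t1 t2 S S1 S2 \<and> tdd_eval (mk T) t1 (enc t1 S1) \<tau> \<and> tdd_eval (mk T) t2 (enc t2 S2) \<tau>)"
      unfolding tdd_eval.simps tin by blast
    also have "\<dots> \<longleftrightarrow> (\<exists>S1 S2. S1 \<in> Nset t1 \<and> S2 \<in> Nset t2 \<and> tcond t1 t2 S S1 S2 \<and> fsem t1 S1 \<tau> \<and> fsem t2 S2 \<tau>)"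
    proof -
      have e1: "tdd_eval (mk T) t1 (enc t1 S1) \<tau> = fsem t1 S1 \<tau>" if "S1 \<in> Nset t1" for S1
        using VNode.IH(1) Nset_F[OF that] by blast
      have e2: "tdd_eval (mk T) t2 (enc t2 S2) \<tau> = fsem t2 S2 \<tau>" if "S2 \<in> Nset t2" for S2
        using VNode.IH(2) Nset_F[OF that] by blast
      show ?thesis
      proof
        assume "\<exists>S1 S2. S1 \<in> Nset t1 \<and> S2 \<in> Nset t2 \<and> tcond t1 t2 S S1 S2 \<and> tdd_eval (mk T) t1 (enc t1 S1) \<tau> \<and> tdd_eval (mk T) t2 (enc t2 S2) \<tau>"
        then obtain S1 S2 where h: "S1 \<in> Nset t1" "S2 \<in> Nset t2" "tcond t1 t2 S S1 S2"
          "tdd_eval (mk T) t1 (enc t1 S1) \<tau>" "tdd_eval (mk T) t2 (enc t2 S2) \<tau>" by blast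
        then show "\<exists>S1 S2. S1 \<in> Nset t1 \<and> S2 \<in> Nset t2 \<and> tcond t1 t2 S S1 S2 \<and> fsem t1 S1 \<tau> \<and> fsem t2 S2 \<tau>"
          using e1[OF h(1)] e2[OF h(2)] by blast
      next
        assume "\<exists>S1 S2. S1 \<in> Nset t1 \<and> S2 \<in> Nset t2 \<and> tcond t1 t2 S S1 S2 \<and> fsem t1 S1 \<tau> \<and> fsem t2 S2 \<tau>"
        then obtain S1 S2 where h: "S1 \<in> Nset t1" "S2 \<in> Nset t2" "tcond t1 t2 S S1 S2"
          "fsem t1 S1 \<tau>" "fsem t2 S2 \<tau>" by blast
        then show "\<exists>S1 S2. S1 \<in> Nset t1 \<and> S2 \<in> Nset t2 \<and> tcond t1 t2 S S1 S2 \<and> tdd_eval (mk T) t1 (enc t1 S1) \<tau> \<and> tdd_eval (mk T) t2 (enc t2 S2) \<tau>"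
          using e1[OF h(1)] e2[OF h(2)] by blast
      qed
    qed
    finally show ?thesis .
  qed
  also have "\<dots> \<longleftrightarrow> tcond t1 t2 S (Sat t1 \<tau>) (Sat t2 \<tau>) \<and> internal t1 \<tau> \<and> internal t2 \<tau>"
    unfolding fsem_def Nset_def by auto
  also have "\<dots> \<longleftrightarrow> fsem (VNode t1 t2) S \<tau>"
    unfolding fsem_def tcond_def internal_node Sat_node XT_node by auto
  finally show ?case .
qed

lemma Nset_fin: "finite (Nset t)"
proof -
  have "Nset t \<subseteq> Pow (set F)" using Nset_F by blast
  then show ?thesis by (rule finite_subset) simp
qed

lemma Sat_bd: "Sat t \<tau> = Sat t (\<lambda>x. x \<in> {y \<in> bd t. \<tau> y})"
proof -
  have "sat_in t \<tau> C = sat_in t (\<lambda>x. x \<in> {y \<in> bd t. \<tau> y}) C" if C: "C \<in> Icr t" for C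
  proof -
    have "x \<in> bd t" if "(x, b) \<in> set C" "x \<in> XT t" for x b
      using that C unfolding bd_def cvars_def by force
    then have e: "\<And>x b. (x, b) \<in> set C \<Longrightarrow> x \<in> XT t \<Longrightarrow> x \<in> bd t" by auto
    show ?thesis unfolding sat_in_def
    proof
      assume "\<exists>(x, b)\<in>set C. x \<in> XT t \<and> \<tau> x = b"
      then obtain x b where h: "(x, b) \<in> set C" "x \<in> XT t" "\<tau> x = b" by blast
      then show "\<exists>(x, b)\<in>set C. x \<in> XT t \<and> (\<lambda>x. x \<in> {y \<in> bd t. \<tau> y}) x = b"
        using e[OF h(1,2)] by (intro bexI[of _ "(x, b)"]) auto
    next
      assume "\<exists>(x, b)\<in>set C. x \<in> XT t \<and> (\<lambda>x. x \<in> {y \<in> bd t. \<tau> y}) x = b"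
      then obtain x b where h: "(x, b) \<in> set C" "x \<in> XT t" "(\<lambda>x. x \<in> {y \<in> bd t. \<tau> y}) x = b" by blast
      then show "\<exists>(x, b)\<in>set C. x \<in> XT t \<and> \<tau> x = b"
        using e[OF h(1,2)] by (intro bexI[of _ "(x, b)"]) auto
    qed
  qed
  then show ?thesis unfolding Sat_def by auto
qed

lemma card_Nset: "card (Nset t) \<le> 2 ^ card (bd t)"
proof -
  have fb: "finite (bd t)" unfolding bd_def XT_def by simp
  have "Nset t \<subseteq> (\<lambda>A. Sat t (\<lambda>x. x \<in> A)) ` Pow (bd t)"
  proof
    fix S assume "S \<in> Nset t"
    then obtain \<tau> where "S = Sat t \<tau>" unfolding Nset_def by auto
    then have "S = Sat t (\<lambda>x. x \<in> {y \<in> bd t. \<tau> y})" using Sat_bd by simp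
    moreover have "{y \<in> bd t. \<tau> y} \<in> Pow (bd t)" by auto
    ultimately show "S \<in> (\<lambda>A. Sat t (\<lambda>x. x \<in> A)) ` Pow (bd t)" by (rule image_eqI)
  qed
  then have "card (Nset t) \<le> card ((\<lambda>A. Sat t (\<lambda>x. x \<in> A)) ` Pow (bd t))"
    using fb by (intro card_mono) auto
  also have "\<dots> \<le> card (Pow (bd t))" by (rule card_image_le) (use fb in simp)
  also have "\<dots> = 2 ^ card (bd t)" using fb by (simp add: card_Pow)
  finally show ?thesis .
qed

lemma subtrees_self: "t \<in> vt_subtrees t"
  by (cases t) auto

lemma subtrees_trans: "s \<in> vt_subtrees t \<Longrightarrow> vt_subtrees s \<subseteq> vt_subtrees t"
  by (induction t) auto

lemma subtrees_child: "VNode t1 t2 \<in> vt_subtrees T \<Longrightarrow> t1 \<in> vt_subtrees T \<and> t2 \<in> vt_subtrees T"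
  using subtrees_trans[of "VNode t1 t2" T] subtrees_self[of t1] subtrees_self[of t2] by auto

lemma finite_subtrees: "finite (vt_subtrees t)"
  by (induction t) auto

lemma Keys_fin: "finite (Keys T)"
proof -
  have "Keys T \<subseteq> vt_subtrees T \<times> Pow (set F)" unfolding Keys_def using Nset_F by auto
  moreover have "finite (vt_subtrees T \<times> Pow (set F))" using finite_subtrees by simp
  ultimately show ?thesis by (rule finite_subset)
qed

lemma mk_tnodes: "g \<in> tnodes (mk T) \<longleftrightarrow> (\<exists>t S. g = enc t S \<and> t \<in> vt_subtrees T \<and> S \<in> Nset t)"
  unfolding mk_def Keys_def by auto

context
  fixes T :: vtree
  assumes over: "set (vt_leaves T) = cnf_vars F"
begin

lemma cv_root: "C \<in> set F \<Longrightarrow> cvars C \<subseteq> XT T"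
  using over unfolding XT_def cnf_vars_def cvars_def by auto

lemma Icr_root: "Icr T = {}"
  unfolding Icr_def using cv_root by auto

lemma root_key: "{} \<in> Nset T"
  unfolding Nset_def Sat_def Icr_root by auto

lemma is_ntdd_mk: "is_ntdd (mk T) T"
  unfolding is_ntdd_def
proof (intro conjI ballI)
  show "finite (tnodes (mk T))" unfolding mk_def using Keys_fin by simp
  show "tout (mk T) \<in> tnodes (mk T)" unfolding mk_tnodes using root_key subtrees_self
    by (auto simp: mk_def)
  show "tvt (mk T) (tout (mk T)) = T" by (simp add: mk_def)
  fix g assume g: "g \<in> tnodes (mk T)"
  then obtain t S where gt: "g = enc t S" "t \<in> vt_subtrees T" "S \<in> Nset t" unfolding mk_tnodes by auto
  have SF: "S \<subseteq> set F" using gt(3) Nset_F by auto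
  show "tvt (mk T) g \<in> vt_subtrees T" using gt by (simp add: mk_def)
  show "case tvt (mk T) g of VLeaf x \<Rightarrow> tin (mk T) g = {}
       | VNode t1 t2 \<Rightarrow> tin (mk T) g \<subseteq> {(g1, g2). g1 \<in> tnodes (mk T) \<and> g2 \<in> tnodes (mk T) \<and>
                                        tvt (mk T) g1 = t1 \<and> tvt (mk T) g2 = t2}"
  proof (cases t)
    case (VLeaf x)
    then show ?thesis using gt SF by (simp add: mk_def tin_of_def)
  next
    case (VNode t1 t2)
    have "t1 \<in> vt_subtrees T" "t2 \<in> vt_subtrees T" using subtrees_child[of t1 t2 T] gt(2) unfolding VNode by blast+
    then have sub: "tin_of t S \<subseteq> {(g1, g2). g1 \<in> tnodes (mk T) \<and> g2 \<in> tnodes (mk T) \<and>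
                                        tvt (mk T) g1 = t1 \<and> tvt (mk T) g2 = t2}"
    proof -
      assume st: "t1 \<in> vt_subtrees T" "t2 \<in> vt_subtrees T"
      show ?thesis
      proof
        fix p assume "p \<in> tin_of t S"
        then obtain S1 S2 where p: "p = (enc t1 S1, enc t2 S2)" "S1 \<in> Nset t1" "S2 \<in> Nset t2"
          unfolding VNode tin_of_def by auto
        have "enc t1 S1 \<in> tnodes (mk T)" unfolding mk_tnodes using p st by blast
        moreover have "enc t2 S2 \<in> tnodes (mk T)" unfolding mk_tnodes using p st by blast
        ultimately show "p \<in> {(g1, g2). g1 \<in> tnodes (mk T) \<and> g2 \<in> tnodes (mk T) \<and>
                                        tvt (mk T) g1 = t1 \<and> tvt (mk T) g2 = t2}"
          using p by (simp add: mk_def)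
      qed
    qed
    have "tvt (mk T) g = VNode t1 t2" "tin (mk T) g = tin_of t S" using gt SF VNode by (simp_all add: mk_def)
    then show ?thesis using sub VNode by simp
  qed
qed

lemma is_tdd_mk: "is_tdd (mk T) T"
  unfolding is_tdd_def
proof (intro conjI is_ntdd_mk; intro allI impI)
  fix x g g'
  assume a: "g \<in> tnodes (mk T) \<and> g' \<in> tnodes (mk T) \<and> tvt (mk T) g = VLeaf x \<and> tvt (mk T) g' = VLeaf x"
  then obtain S S' where gs: "g = enc (VLeaf x) S" "S \<in> Nset (VLeaf x)" "g' = enc (VLeaf x) S'" "S' \<in> Nset (VLeaf x)"
    unfolding mk_tnodes by (auto simp: mk_def)
  have SF: "S \<subseteq> set F" "S' \<subseteq> set F" using gs Nset_F by auto
  have lab: "tlab (mk T) g = lab_of (VLeaf x) S" "tlab (mk T) g' = lab_of (VLeaf x) S'"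
    using gs SF by (auto simp: mk_def)
  have ok: "leaf_ok (VLeaf x) S b \<Longrightarrow> leaf_ok (VLeaf x) S' b \<Longrightarrow> g = g'" for b
    using gs unfolding leaf_ok_def by simp
  show "(tlab (mk T) g = LPos \<and> tlab (mk T) g' = LPos \<longrightarrow> g = g') \<and>
        (tlab (mk T) g = LNeg \<and> tlab (mk T) g' = LNeg \<longrightarrow> g = g') \<and>
        (tlab (mk T) g = LConst True \<and> tlab (mk T) g' = LConst True \<longrightarrow> g = g') \<and>
        (tlab (mk T) g = LConst True \<and> g' \<noteq> g \<longrightarrow> tlab (mk T) g' = LConst False)"
  proof (intro conjI)
    show "tlab (mk T) g = LPos \<and> tlab (mk T) g' = LPos \<longrightarrow> g = g'"
      using lab ok[of True] unfolding lab_of_def by (auto split: if_splits)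
    show "tlab (mk T) g = LNeg \<and> tlab (mk T) g' = LNeg \<longrightarrow> g = g'"
      using lab ok[of False] unfolding lab_of_def by (auto split: if_splits)
    show "tlab (mk T) g = LConst True \<and> tlab (mk T) g' = LConst True \<longrightarrow> g = g'"
      using lab ok[of True] unfolding lab_of_def by (auto split: if_splits)
    show "tlab (mk T) g = LConst True \<and> g' \<noteq> g \<longrightarrow> tlab (mk T) g' = LConst False"
      using lab ok[of True] ok[of False] unfolding lab_of_def by (auto split: if_splits)
  qed
next
  fix t1 t2 g g'
  assume a: "g \<in> tnodes (mk T) \<and> g' \<in> tnodes (mk T) \<and> tvt (mk T) g = VNode t1 t2 \<and>
        tvt (mk T) g' = VNode t1 t2 \<and> g \<noteq> g'"
  then obtain S S' where gs: "g = enc (VNode t1 t2) S" "S \<in> Nset (VNode t1 t2)"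
      "g' = enc (VNode t1 t2) S'" "S' \<in> Nset (VNode t1 t2)"
    unfolding mk_tnodes by (auto simp: mk_def)
  have SF: "S \<subseteq> set F" "S' \<subseteq> set F" using gs Nset_F by auto
  have ne: "S \<noteq> S'" using a gs by auto
  show "tin (mk T) g \<inter> tin (mk T) g' = {}"
  proof (rule ccontr)
    assume "tin (mk T) g \<inter> tin (mk T) g' \<noteq> {}"
    then obtain S1 S2 S1' S2' where
      h: "S1 \<in> Nset t1" "S2 \<in> Nset t2" "tcond t1 t2 S S1 S2"
         "S1' \<in> Nset t1" "S2' \<in> Nset t2" "tcond t1 t2 S' S1' S2'"
         "enc t1 S1 = enc t1 S1'" "enc t2 S2 = enc t2 S2'"
      using gs SF by (auto simp: mk_def tin_of_def)
    have "S1 = S1'" using enc_inj[OF Nset_F[OF h(1)] Nset_F[OF h(4)]] h(7) by simp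
    moreover have "S2 = S2'" using enc_inj[OF Nset_F[OF h(2)] Nset_F[OF h(5)]] h(8) by simp
    ultimately have "S1 = S1'" "S2 = S2'" by auto
    then show False using h(3,6) ne unfolding tcond_def by auto
  qed
qed

lemma computes_mk: "tdd_computes (mk T) T \<tau> \<longleftrightarrow> cnf_sem F \<tau>"
proof -
  have "tdd_computes (mk T) T \<tau> \<longleftrightarrow> fsem T {} \<tau>"
    unfolding tdd_computes_def using eval_mk[of "{}" T T \<tau>] by (simp add: mk_def)
  also have "\<dots> \<longleftrightarrow> internal T \<tau>" unfolding fsem_def Sat_def Icr_root by simp
  also have "\<dots> \<longleftrightarrow> cnf_sem F \<tau>" unfolding internal_def cnf_sem_def using cv_root by auto
  finally show ?thesis .
qed

lemma size_mk:
  assumes bd: "\<And>t. t \<in> vt_subtrees T \<Longrightarrow> card (bd t) \<le> \<beta>"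
  shows "tdd_size (mk T) \<le> card (vt_subtrees T) * 2 ^ \<beta> * 2 ^ \<beta> * 2 ^ \<beta>"
proof -
  have Nb: "card (Nset t) \<le> 2 ^ \<beta>" if "t \<in> vt_subtrees T" for t
    using card_Nset[of t] bd[OF that] by (meson le_trans one_le_numeral power_increasing)
  have inj: "inj_on (\<lambda>(t, S). enc t S) (Keys T)"
    using enc_inj Nset_F unfolding Keys_def inj_on_def by auto
  have "tdd_size (mk T) = sum (\<lambda>g. card (tin_of (dvt g) (dS g))) ((\<lambda>(t, S). enc t S) ` Keys T)"
    unfolding tdd_size_def mk_def by simp
  also have "\<dots> = sum ((\<lambda>g. card (tin_of (dvt g) (dS g))) \<circ> (\<lambda>(t, S). enc t S)) (Keys T)"
    by (rule sum.reindex[OF inj])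
  also have "\<dots> = (\<Sum>k\<in>Keys T. card (tin_of (fst k) (snd k)))"
    by (rule sum.cong) (auto simp: Keys_def Nset_F)
  finally have "tdd_size (mk T) = (\<Sum>k\<in>Keys T. card (tin_of (fst k) (snd k)))" .
  also have "\<dots> \<le> (\<Sum>k\<in>Keys T. 2 ^ \<beta> * 2 ^ \<beta>)"
  proof (rule sum_mono)
    fix k assume k: "k \<in> Keys T"
    obtain t S where kt: "k = (t, S)" "t \<in> vt_subtrees T" using k unfolding Keys_def by auto
    show "card (tin_of (fst k) (snd k)) \<le> 2 ^ \<beta> * 2 ^ \<beta>"
    proof (cases t)
      case (VLeaf x) then show ?thesis using kt by (simp add: tin_of_def)
    next
      case (VNode t1 t2)
      have st: "t1 \<in> vt_subtrees T" "t2 \<in> vt_subtrees T" using subtrees_child[of t1 t2 T] kt(2) unfolding VNode by blast+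
      have "tin_of t S \<subseteq> (\<lambda>(S1, S2). (enc t1 S1, enc t2 S2)) ` (Nset t1 \<times> Nset t2)"
        unfolding VNode tin_of_def by auto
      then have "card (tin_of t S) \<le> card ((\<lambda>(S1, S2). (enc t1 S1, enc t2 S2)) ` (Nset t1 \<times> Nset t2))"
        using Nset_fin by (intro card_mono) auto
      also have "\<dots> \<le> card (Nset t1 \<times> Nset t2)" by (rule card_image_le) (use Nset_fin in simp)
      also have "\<dots> = card (Nset t1) * card (Nset t2)" by (simp add: card_cartesian_product)
      also have "\<dots> \<le> 2 ^ \<beta> * 2 ^ \<beta>" using Nb[OF st(1)] Nb[OF st(2)] by (rule mult_le_mono)
      finally show ?thesis using kt by simp
    qed
  qed
  also have "\<dots> = card (Keys T) * (2 ^ \<beta> * 2 ^ \<beta>)" by simp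
  also have "card (Keys T) \<le> card (vt_subtrees T) * 2 ^ \<beta>"
  proof -
    have "Keys T = Sigma (vt_subtrees T) Nset" unfolding Keys_def by auto
    then have "card (Keys T) = (\<Sum>t\<in>vt_subtrees T. card (Nset t))"
      using finite_subtrees Nset_fin by (simp add: card_SigmaI)
    also have "\<dots> \<le> (\<Sum>t\<in>vt_subtrees T. 2 ^ \<beta>)" using Nb by (rule sum_mono)
    finally show ?thesis by simp
  qed
  then have "card (Keys T) * (2 ^ \<beta> * 2 ^ \<beta>) \<le> card (vt_subtrees T) * 2 ^ \<beta> * (2 ^ \<beta> * 2 ^ \<beta>)"
    by (rule mult_le_mono1)
  finally show ?thesis by (simp add: mult.assoc)
qed

end

end

definition pvs :: "nat \<Rightarrow> nat list \<Rightarrow> var list" where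
  "pvs K w = (if w = [] then [] else map (\<lambda>i. sv ((butlast w, i), (w, i))) [0..<K])"
definition cvs :: "nat \<Rightarrow> nat list \<Rightarrow> var list" where
  "cvs K w = map sv (cl_edges K w)"
definition xvs :: "nat \<Rightarrow> nat list \<Rightarrow> var list" where
  "xvs K w = map (\<lambda>i. xv (w, i)) [0..<K]"
definition PL :: "nat \<Rightarrow> nat list \<Rightarrow> var list" where
  "PL K w = remdups (pvs K w @ cvs K w) @ xvs K w"

fun comb :: "var list \<Rightarrow> vtree" where
  "comb [] = VLeaf 0"
| "comb [x] = VLeaf x"
| "comb (x # y # xs) = VNode (VLeaf x) (comb (y # xs))"

fun vt :: "nat \<Rightarrow> nat \<Rightarrow> nat list \<Rightarrow> vtree" where
  "vt K 0 w = comb (PL K w)"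
| "vt K (Suc r) w = VNode (comb (PL K w)) (VNode (vt K r (w @ [0])) (VNode (vt K r (w @ [1])) (vt K r (w @ [2]))))"

definition own :: "var \<Rightarrow> nat list" where
  "own y = (case (from_nat y :: vert + (vert \<times> vert)) of Inl v \<Rightarrow> fst v | Inr e \<Rightarrow> fst (snd e))"

lemma own_xv[simp]: "own (xv v) = fst v" unfolding own_def xv_def by simp
lemma own_sv[simp]: "own (sv e) = fst (snd e)" unfolding own_def sv_def by simp

definition Sub :: "nat list \<Rightarrow> nat \<Rightarrow> nat list set" where
  "Sub w r = {w @ u | u. u \<in> Adr r}"

lemma comb_leaves: "L \<noteq> [] \<Longrightarrow> vt_leaves (comb L) = L"
  by (induction L rule: comb.induct) auto

lemma comb_sub: "t \<in> vt_subtrees (comb L) \<Longrightarrow> L \<noteq> [] \<Longrightarrow>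
    (\<exists>k<length L. t = comb (drop k L)) \<or> (\<exists>x\<in>set L. t = VLeaf x)"
proof (induction L rule: comb.induct)
  case 1 then show ?case by simp
next
  case (2 x) then show ?case by auto
next
  case (3 x y xs)
  from "3.prems"(1) have "t = comb (x # y # xs) \<or> t = VLeaf x \<or> t \<in> vt_subtrees (comb (y # xs))" by auto
  then show ?case
  proof (elim disjE)
    assume "t = comb (x # y # xs)" then show ?thesis by (intro disjI1 exI[of _ 0]) auto
  next
    assume "t = VLeaf x" then show ?thesis by auto
  next
    assume "t \<in> vt_subtrees (comb (y # xs))"
    from "3.IH"[OF this] have "(\<exists>k<length (y # xs). t = comb (drop k (y # xs))) \<or> (\<exists>x\<in>set (y # xs). t = VLeaf x)" by simp
    then show ?thesis
    proof (elim disjE exE conjE)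
      fix k assume "k < length (y # xs)" "t = comb (drop k (y # xs))"
      then show ?thesis by (intro disjI1 exI[of _ "Suc k"]) auto
    qed auto
  qed
qed

lemma own_PL: "y \<in> set (PL K w) \<Longrightarrow> own y = w"
  unfolding PL_def pvs_def cvs_def xvs_def by (auto simp: set_L1 split: if_splits)

lemma distinct_PL: "distinct (PL K w)"
proof -
  have "distinct (xvs K w)" unfolding xvs_def by (simp add: distinct_map inj_on_def)
  moreover have "set (pvs K w @ cvs K w) \<inter> set (xvs K w) = {}"
    unfolding pvs_def cvs_def xvs_def by auto
  ultimately show ?thesis unfolding PL_def by simp
qed

lemma PL_ne: "1 \<le> K \<Longrightarrow> PL K w \<noteq> []"
  unfolding PL_def xvs_def by simp

lemma Adr_Suc: "Adr (Suc r) = insert [] {a # u | a u. a < 3 \<and> u \<in> Adr r}"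
  unfolding Adr_def by (auto simp: length_Suc_conv) (metis length_Cons list.set_intros Suc_le_mono list.exhaust list.set_cases) 

lemma leaves_vt: "1 \<le> K \<Longrightarrow> set (vt_leaves (vt K r w)) = (\<Union>u\<in>Adr r. set (PL K (w @ u)))"
proof (induction r arbitrary: w)
  case 0
  have "Adr 0 = {[]}" unfolding Adr_def by auto
  then show ?case using comb_leaves[OF PL_ne[OF 0]] by simp
next
  case (Suc r)
  have "set (vt_leaves (vt K (Suc r) w)) = set (PL K w) \<union> (\<Union>a\<in>{0,1,2}. \<Union>u\<in>Adr r. set (PL K (w @ [a] @ u)))"
    using comb_leaves[OF PL_ne[OF Suc.prems]] Suc.IH[OF Suc.prems] by auto
  also have "\<dots> = (\<Union>u\<in>Adr (Suc r). set (PL K (w @ u)))"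
  proof -
    have "{0::nat,1,2} = {a. a < 3}" by auto
    then show ?thesis unfolding Adr_Suc by auto
  qed
  finally show ?case .
qed

lemma distinct_vt: "1 \<le> K \<Longrightarrow> distinct (vt_leaves (vt K r w))"
proof (induction r arbitrary: w)
  case 0
  then show ?case using comb_leaves[OF PL_ne[OF 0]] distinct_PL by simp
next
  case (Suc r)
  have own_ch: "own y \<noteq> w \<and> (\<exists>u. own y = w @ [a] @ u)" if "y \<in> set (vt_leaves (vt K r (w @ [a])))" for y a
  proof -
    have "y \<in> (\<Union>u\<in>Adr r. set (PL K ((w @ [a]) @ u)))"
      using that unfolding leaves_vt[OF Suc.prems, of r "w @ [a]"] .
    then obtain u where "u \<in> Adr r" "y \<in> set (PL K ((w @ [a]) @ u))" by (rule UN_E)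
    then have "own y = w @ [a] @ u" using own_PL by simp
    then show ?thesis by simp
  qed
  have d1: "set (vt_leaves (vt K r (w @ [a]))) \<inter> set (vt_leaves (vt K r (w @ [b]))) = {}" if "a \<noteq> b" for a b
  proof -
    have "\<And>u u'. w @ [a] @ u \<noteq> w @ [b] @ u'" using that by simp
    then show ?thesis using own_ch[of _ a] own_ch[of _ b] by (metis disjoint_iff)
  qed
  have d0: "set (PL K w) \<inter> set (vt_leaves (vt K r (w @ [a]))) = {}" for a
    using own_ch[of _ a] own_PL[of _ K w] by blast
  show ?case using comb_leaves[OF PL_ne[OF Suc.prems]] distinct_PL Suc.IH[OF Suc.prems]
      d0[of 0] d0[of 1] d0[of 2] d1[of 0 1] d1[of 0 2] d1[of 1 2]
    by (auto simp: Int_Un_distrib Int_Un_distrib2)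
qed

lemma PL_X: "u \<in> Adr D \<Longrightarrow> set (PL K u) \<subseteq> xv ` Vs K D \<union> sv ` Eset K D"
proof
  fix y assume u: "u \<in> Adr D" and y: "y \<in> set (PL K u)"
  then consider (p) i where "u \<noteq> []" "i < K" "y = sv ((butlast u, i), (u, i))"
    | (c) e where "e \<in> set (cl_edges K u)" "y = sv e"
    | (x) i where "i < K" "y = xv (u, i)"
    unfolding PL_def pvs_def cvs_def xvs_def by (auto split: if_splits)
  then show "y \<in> xv ` Vs K D \<union> sv ` Eset K D"
  proof cases
    case (p i)
    have uu: "u = butlast u @ [last u]" using p(1) by simp
    have "last u < 3" using u p(1) unfolding Adr_def by auto
    moreover have "butlast u \<in> Adr D" using u unfolding Adr_def by (auto dest: in_set_butlastD)
    ultimately have "((butlast u, i), (u, i)) \<in> Eset K D"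
      using u p(2) uu unfolding Eset_def Vs_def by (auto intro!: exI[of _ "last u"])
    then show ?thesis using p by auto
  next
    case (c e)
    then have "e \<in> Eset K D" using u unfolding set_L1 Eset_def Vs_def by auto
    then show ?thesis using c by auto
  next
    case (x i)
    then show ?thesis using u unfolding Vs_def by auto
  qed
qed

lemma X_PL: "y \<in> xv ` Vs K D \<union> sv ` Eset K D \<Longrightarrow> own y \<in> Adr D \<and> y \<in> set (PL K (own y))"
proof -
  assume "y \<in> xv ` Vs K D \<union> sv ` Eset K D"
  then consider (x) v where "v \<in> Vs K D" "y = xv v" | (s) e where "e \<in> Eset K D" "y = sv e" by auto
  then show ?thesis
  proof cases
    case (x v)
    then show ?thesis unfolding Vs_def PL_def xvs_def by auto
  next
    case (s e)
    obtain w i w' j where e: "e = ((w, i), (w', j))" by (metis prod.exhaust)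
    have h: "w \<in> Adr D" "i < K" "w' \<in> Adr D" "j < K" "(w = w' \<and> i < j) \<or> (i = j \<and> (\<exists>a<3. w' = w @ [a]))"
      using s(1) unfolding Eset_def Vs_def e by auto
    show ?thesis
    proof (cases "w = w' \<and> i < j")
      case True
      then have "e \<in> set (cl_edges K w')" unfolding set_L1 e using h by auto
      then show ?thesis using s h e unfolding PL_def cvs_def by auto
    next
      case False
      then obtain a where a: "i = j" "a < 3" "w' = w @ [a]" using h(5) by blast
      have "y \<in> set (pvs K w')" unfolding pvs_def using a h s e by auto
      then show ?thesis using s h e unfolding PL_def by auto
    qed
  qed
qed

lemma vars_top: "2 \<le> K \<Longrightarrow> set (vt_leaves (vt K D [])) = cnf_vars (Fk K D)"
proof -
  assume K: "2 \<le> K"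
  have "set (vt_leaves (vt K D [])) = (\<Union>u\<in>Adr D. set (PL K u))" using leaves_vt[of K D "[]"] K by simp
  also have "\<dots> = xv ` Vs K D \<union> sv ` Eset K D"
  proof
    show "(\<Union>u\<in>Adr D. set (PL K u)) \<subseteq> xv ` Vs K D \<union> sv ` Eset K D" using PL_X by blast
    show "xv ` Vs K D \<union> sv ` Eset K D \<subseteq> (\<Union>u\<in>Adr D. set (PL K u))" using X_PL by blast
  qed
  finally show ?thesis using vars_Fk2[OF K] by simp
qed

lemma XT_vt:
  assumes K: "2 \<le> K" and w: "length w + r = D" "\<forall>a\<in>set w. a < 3"
  shows "XT (vt K r w) = {y \<in> xv ` Vs K D \<union> sv ` Eset K D. own y \<in> Sub w r}"
proof
  show "XT (vt K r w) \<subseteq> {y \<in> xv ` Vs K D \<union> sv ` Eset K D. own y \<in> Sub w r}"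
  proof
    fix y assume "y \<in> XT (vt K r w)"
    then obtain u where u: "u \<in> Adr r" "y \<in> set (PL K (w @ u))" unfolding XT_def using leaves_vt[of K r w] K by auto
    have "w @ u \<in> Adr D" using u(1) w unfolding Adr_def by auto
    then show "y \<in> {y \<in> xv ` Vs K D \<union> sv ` Eset K D. own y \<in> Sub w r}"
      using PL_X u own_PL unfolding Sub_def by blast
  qed
  show "{y \<in> xv ` Vs K D \<union> sv ` Eset K D. own y \<in> Sub w r} \<subseteq> XT (vt K r w)"
  proof
    fix y assume y: "y \<in> {y \<in> xv ` Vs K D \<union> sv ` Eset K D. own y \<in> Sub w r}"
    then obtain u where u: "u \<in> Adr r" "own y = w @ u" unfolding Sub_def by auto
    have "y \<in> set (PL K (own y))" using X_PL y by blast
    then show "y \<in> XT (vt K r w)" unfolding XT_def using leaves_vt[of K r w] K u by auto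
  qed
qed

lemma clause_Fk: "C \<in> set (Fk K D) \<Longrightarrow> \<exists>e\<in>Eset K D. C = clause_of e"
  unfolding Fk_def set_edges[symmetric] by auto

lemma cvars_clause: "cvars (clause_of e) = {xv (fst e), xv (snd e), sv e}"
  unfolding cvars_def clause_of_def by auto

lemma bd_node: "bd F (VNode t1 t2) \<subseteq> bd F t1 \<union> bd F t2"
proof
  fix x assume "x \<in> bd F (VNode t1 t2)"
  then obtain C where x: "x \<in> XT t1 \<union> XT t2" "C \<in> Icr F (VNode t1 t2)" "x \<in> cvars C"
    unfolding bd_def XT_node by auto
  have C: "C \<in> set F" "\<not> cvars C \<subseteq> XT t1 \<union> XT t2" using x(2) unfolding Icr_def XT_node by auto
  show "x \<in> bd F t1 \<union> bd F t2"
  proof (cases "x \<in> XT t1")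
    case True
    then have "C \<in> Icr F t1" using C x(3) unfolding Icr_def by auto
    then show ?thesis using True x(3) unfolding bd_def by auto
  next
    case False
    then have "x \<in> XT t2" using x(1) by auto
    moreover from this have "C \<in> Icr F t2" using C x(3) unfolding Icr_def by auto
    ultimately show ?thesis using x(3) unfolding bd_def by auto
  qed
qed

lemma bd_leaf: "bd F (VLeaf x) \<subseteq> {x}"
  unfolding bd_def XT_def by auto

lemma card_pvx: "card (set (pvs K w) \<union> set (xvs K w)) \<le> 2 * K"
proof -
  have "card (set (pvs K w)) \<le> K" using card_length[of "pvs K w"] unfolding pvs_def by auto
  moreover have "card (set (xvs K w)) \<le> K" using card_length[of "xvs K w"] unfolding xvs_def by auto
  ultimately show ?thesis using card_Un_le[of "set (pvs K w)" "set (xvs K w)"] by linarith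
qed

lemma bd_vt:
  assumes K: "2 \<le> K" and w: "length w + r = D" "\<forall>a\<in>set w. a < 3"
  shows "bd (Fk K D) (vt K r w) \<subseteq> set (pvs K w) \<union> set (xvs K w)"
proof
  let ?X = "xv ` Vs K D \<union> sv ` Eset K D"
  have XT: "XT (vt K r w) = {y \<in> ?X. own y \<in> Sub w r}" by (rule XT_vt[OF K w])
  fix x assume "x \<in> bd (Fk K D) (vt K r w)"
  then obtain C where x: "x \<in> XT (vt K r w)" "C \<in> Icr (Fk K D) (vt K r w)" "x \<in> cvars C"
    unfolding bd_def by auto
  from x(2) have CF: "C \<in> set (Fk K D)" and cr: "cvars C \<inter> XT (vt K r w) \<noteq> {}" "\<not> cvars C \<subseteq> XT (vt K r w)"
    unfolding Icr_def by auto
  obtain e where e: "e \<in> Eset K D" "C = clause_of e" using clause_Fk[OF CF] by blast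
  obtain p i q j where eq: "e = ((p, i), (q, j))" by (metis prod.exhaust)
  have h: "p \<in> Adr D" "i < K" "q \<in> Adr D" "j < K" "(p = q \<and> i < j) \<or> (i = j \<and> (\<exists>a<3. q = p @ [a]))"
    using e(1) unfolding Eset_def Vs_def eq by auto
  have inX: "xv (p, i) \<in> ?X" "xv (q, j) \<in> ?X" "sv e \<in> ?X" using h e(1) unfolding Vs_def eq by auto
  have cv: "cvars C = {xv (p, i), xv (q, j), sv e}" using e(2) cvars_clause eq by simp
  have mem: "y \<in> XT (vt K r w) \<longleftrightarrow> own y \<in> Sub w r" if "y \<in> ?X" for y using that XT by auto
  show "x \<in> set (pvs K w) \<union> set (xvs K w)"
  proof (cases "p = q")
    case True
    then have "own (xv (p, i)) = p" "own (xv (q, j)) = p" "own (sv e) = p" using eq by auto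
    then have "cvars C \<subseteq> XT (vt K r w) \<or> cvars C \<inter> XT (vt K r w) = {}"
      using mem inX cv by auto
    then show ?thesis using cr by auto
  next
    case False
    then obtain a where a: "i = j" "a < 3" "q = p @ [a]" using h(5) by blast
    have ownq: "own (xv (q, j)) = q" "own (sv e) = q" "own (xv (p, i)) = p" using eq by auto
    have pS: "p \<notin> Sub w r"
    proof
      assume "p \<in> Sub w r"
      then obtain u where u: "u \<in> Adr r" "p = w @ u" unfolding Sub_def by auto
      have "length q \<le> D" using h(3) unfolding Adr_def by simp
      then have "u @ [a] \<in> Adr r" using u a w(1) unfolding Adr_def by auto
      then have "q \<in> Sub w r" using u a unfolding Sub_def by auto
      then have "cvars C \<subseteq> XT (vt K r w)" using mem inX cv ownq \<open>p \<in> Sub w r\<close> by auto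
      then show False using cr by auto
    qed
    have qS: "q \<in> Sub w r"
    proof (rule ccontr)
      assume "q \<notin> Sub w r"
      then have "cvars C \<inter> XT (vt K r w) = {}" using mem inX cv ownq pS by auto
      then show False using cr by auto
    qed
    have qw: "q = w"
    proof -
      obtain u where u: "u \<in> Adr r" "q = w @ u" using qS unfolding Sub_def by auto
      show ?thesis
      proof (cases u rule: rev_cases)
        case Nil then show ?thesis using u by simp
      next
        case (snoc u' b)
        then have "p = w @ u'" using u a by simp
        moreover have "u' \<in> Adr r" using u snoc unfolding Adr_def by auto
        ultimately have "p \<in> Sub w r" unfolding Sub_def by auto
        then show ?thesis using pS by simp
      qed
    qed
    have "x \<noteq> xv (p, i)" using x(1) mem inX ownq pS by auto
    then have "x = xv (w, i) \<or> x = sv ((butlast w, i), (w, i))" using x(3) cv eq a qw by auto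
    moreover have "w \<noteq> []"
    proof -
      have "w = p @ [a]" using qw a by simp
      then show ?thesis by simp
    qed
    ultimately show ?thesis using h(2) unfolding pvs_def xvs_def by auto
  qed
qed

lemma drop_tail: "y \<in> set (drop k (R @ S)) \<Longrightarrow> y \<notin> set S \<Longrightarrow> set S \<subseteq> set (drop k (R @ S))"
proof -
  assume y: "y \<in> set (drop k (R @ S))" "y \<notin> set S"
  show ?thesis
  proof (cases "k < length R")
    case True then show ?thesis by simp
  next
    case False
    then have "set (drop k (R @ S)) \<subseteq> set S" by (simp add: set_drop_subset)
    then show ?thesis using y by auto
  qed
qed

lemma bd_comb:
  assumes K: "2 \<le> K" and w: "w \<in> Adr D" and k: "k < length (PL K w)"
  shows "bd (Fk K D) (comb (drop k (PL K w))) \<subseteq> set (pvs K w) \<union> set (xvs K w)"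
proof
  let ?L = "drop k (PL K w)"
  fix x assume "x \<in> bd (Fk K D) (comb ?L)"
  then obtain C where x: "x \<in> XT (comb ?L)" "C \<in> Icr (Fk K D) (comb ?L)" "x \<in> cvars C"
    unfolding bd_def by auto
  have ne: "?L \<noteq> []" using k by simp
  have XT: "XT (comb ?L) = set ?L" unfolding XT_def using comb_leaves[OF ne] by simp
  from x(2) have CF: "C \<in> set (Fk K D)" and cr: "\<not> cvars C \<subseteq> set ?L"
    unfolding Icr_def XT by auto
  show "x \<in> set (pvs K w) \<union> set (xvs K w)"
  proof (rule ccontr)
    assume nx: "x \<notin> set (pvs K w) \<union> set (xvs K w)"
    have "x \<in> set (PL K w)" using x(1) XT by (auto dest: in_set_dropD)
    then have "x \<in> set (cvs K w)" using nx unfolding PL_def by auto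
    then obtain e0 where e0: "e0 \<in> set (cl_edges K w)" "x = sv e0" unfolding cvs_def by auto
    obtain i j where ij: "e0 = ((w, i), (w, j))" "i < j" "j < K" using e0(1) unfolding set_L1 by auto
    obtain e where e: "e \<in> Eset K D" "C = clause_of e" using clause_Fk[OF CF] by blast
    have "x = sv e" using x(3) e0(2) e(2) cvars_clause by auto
    then have ee: "e = e0" using e0(2) by simp
    have xin: "x \<in> set ?L" using x(1) XT by simp
    have xn: "x \<notin> set (xvs K w)" using nx by simp
    have "set (xvs K w) \<subseteq> set ?L" using drop_tail[of x k "remdups (pvs K w @ cvs K w)" "xvs K w"] xin xn
      unfolding PL_def by simp
    moreover have "xv (w, i) \<in> set (xvs K w)" "xv (w, j) \<in> set (xvs K w)" using ij unfolding xvs_def by auto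
    ultimately have "cvars C \<subseteq> set ?L" using xin e(2) ee ij cvars_clause \<open>x = sv e\<close> by auto
    then show False using cr by simp
  qed
qed

lemma bd_combsub:
  assumes K: "2 \<le> K" and w: "w \<in> Adr D" and t: "t \<in> vt_subtrees (comb (PL K w))"
  shows "card (bd (Fk K D) t) \<le> 2 * K"
proof -
  have ne: "PL K w \<noteq> []" using PL_ne K by simp
  from comb_sub[OF t ne] show ?thesis
  proof (elim disjE exE bexE conjE)
    fix k assume k: "k < length (PL K w)" "t = comb (drop k (PL K w))"
    have "card (bd (Fk K D) t) \<le> card (set (pvs K w) \<union> set (xvs K w))"
      using bd_comb[OF K w k(1)] k(2) by (intro card_mono) auto
    then show ?thesis using card_pvx[of K w] by linarith
  next
    fix x assume "t = VLeaf x"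
    then have "card (bd (Fk K D) t) \<le> card {x}" using bd_leaf[of "Fk K D" x] by (intro card_mono) auto
    then show ?thesis using K by simp
  qed
qed

lemma card_bd_vt:
  assumes K: "2 \<le> K" and w: "length w + r = D" "\<forall>a\<in>set w. a < 3"
  shows "card (bd (Fk K D) (vt K r w)) \<le> 2 * K"
proof -
  have "card (bd (Fk K D) (vt K r w)) \<le> card (set (pvs K w) \<union> set (xvs K w))"
    using bd_vt[OF K w] by (intro card_mono) auto
  then show ?thesis using card_pvx[of K w] by linarith
qed

lemma bd_all:
  assumes K: "2 \<le> K"
  shows "length w + r = D \<Longrightarrow> \<forall>a\<in>set w. a < 3 \<Longrightarrow> t \<in> vt_subtrees (vt K r w) \<Longrightarrow> card (bd (Fk K D) t) \<le> 6 * K"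
proof (induction r arbitrary: w)
  case 0
  have "w \<in> Adr D" using "0.prems" unfolding Adr_def by auto
  then show ?case using bd_combsub[OF K _ ] "0.prems"(3) by fastforce
next
  case (Suc r)
  have wA: "w \<in> Adr D" using Suc.prems unfolding Adr_def by auto
  have wa: "length (w @ [a]) + r = D" "\<forall>b\<in>set (w @ [a]). b < 3" if "a < 3" for a
    using Suc.prems that by auto
  let ?V = "\<lambda>a. vt K r (w @ [a])"
  have c0: "card (bd (Fk K D) (?V a)) \<le> 2 * K" if "a < 3" for a using card_bd_vt[OF K wa[OF that]] .
  have fin: "finite (bd (Fk K D) t)" for t unfolding bd_def XT_def by simp
  have n12: "card (bd (Fk K D) (VNode (?V 1) (?V 2))) \<le> 4 * K"
  proof -
    have "card (bd (Fk K D) (VNode (?V 1) (?V 2))) \<le> card (bd (Fk K D) (?V 1) \<union> bd (Fk K D) (?V 2))"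
      using bd_node fin by (intro card_mono) auto
    also have "\<dots> \<le> card (bd (Fk K D) (?V 1)) + card (bd (Fk K D) (?V 2))" by (rule card_Un_le)
    finally show ?thesis using c0[of 1] c0[of 2] by simp
  qed
  have n012: "card (bd (Fk K D) (VNode (?V 0) (VNode (?V 1) (?V 2)))) \<le> 6 * K"
  proof -
    have "card (bd (Fk K D) (VNode (?V 0) (VNode (?V 1) (?V 2)))) \<le>
        card (bd (Fk K D) (?V 0) \<union> bd (Fk K D) (VNode (?V 1) (?V 2)))"
      using bd_node fin by (intro card_mono) auto
    also have "\<dots> \<le> card (bd (Fk K D) (?V 0)) + card (bd (Fk K D) (VNode (?V 1) (?V 2)))" by (rule card_Un_le)
    finally show ?thesis using c0[of 0] n12 by simp
  qed
  from Suc.prems(3) have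
    "t = vt K (Suc r) w \<or> t \<in> vt_subtrees (comb (PL K w)) \<or> t = VNode (?V 0) (VNode (?V 1) (?V 2)) \<or>
     t = VNode (?V 1) (?V 2) \<or> t \<in> vt_subtrees (?V 0) \<or> t \<in> vt_subtrees (?V 1) \<or> t \<in> vt_subtrees (?V 2)"
    by auto
  then show ?case
  proof (elim disjE)
    assume "t = vt K (Suc r) w" then show ?thesis using card_bd_vt[OF K Suc.prems(1,2)] by simp
  next
    assume "t \<in> vt_subtrees (comb (PL K w))" then show ?thesis using bd_combsub[OF K wA] by fastforce
  next
    assume "t = VNode (?V 0) (VNode (?V 1) (?V 2))" then show ?thesis using n012 by simp
  next
    assume "t = VNode (?V 1) (?V 2)" then show ?thesis using n12 by simp
  next
    assume "t \<in> vt_subtrees (?V 0)" then show ?thesis using Suc.IH[OF wa[of 0]] by simp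
  next
    assume "t \<in> vt_subtrees (?V 1)" then show ?thesis using Suc.IH[OF wa[of 1]] by simp
  next
    assume "t \<in> vt_subtrees (?V 2)" then show ?thesis using Suc.IH[OF wa[of 2]] by simp
  qed
qed

lemma leaves_ne: "vt_leaves t \<noteq> []"
  by (induction t) auto

lemma card_subtrees: "card (vt_subtrees t) + 1 \<le> 2 * length (vt_leaves t)"
proof (induction t)
  case (VLeaf x) then show ?case by simp
next
  case (VNode t1 t2)
  have "card (vt_subtrees (VNode t1 t2)) \<le> Suc (card (vt_subtrees t1 \<union> vt_subtrees t2))"
    by (simp add: card_insert_le_m1 card_insert_if)
  also have "\<dots> \<le> Suc (card (vt_subtrees t1) + card (vt_subtrees t2))" using card_Un_le by simp
  finally show ?case using VNode by simp
qed

lemma card_Adr: "card (Adr D) \<le> (D + 1) * 3 ^ D"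
proof -
  have "Adr D = {w. set w \<subseteq> {0..<3} \<and> length w \<le> D}" unfolding Adr_def by auto
  then have "card (Adr D) = (\<Sum>i\<le>D. 3 ^ i)" by (simp add: card_lists_length_le)
  also have "\<dots> \<le> (\<Sum>i\<le>D. (3::nat) ^ D)" by (intro sum_mono power_increasing) auto
  finally show ?thesis by simp
qed

lemma card_Vs: "card (Vs K D) \<le> K * ((D + 1) * 3 ^ D)"
proof -
  have "Vs K D \<subseteq> Adr D \<times> {0..<K}" unfolding Vs_def by auto
  then have "card (Vs K D) \<le> card (Adr D \<times> {0..<K})"
    using finite_Adr by (intro card_mono) auto
  also have "\<dots> = card (Adr D) * K" by (simp add: card_cartesian_product)
  finally show ?thesis using card_Adr[of D] by (metis mult.commute mult_le_mono2 order_trans)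
qed

theorem tdd_Fk:
  assumes K: "2 \<le> K"
  shows "\<exists>T C. vtree_over T (cnf_vars (Fk K D)) \<and> is_tdd C T \<and>
     (\<forall>\<tau>. tdd_computes C T \<tau> \<longleftrightarrow> cnf_sem (Fk K D) \<tau>) \<and>
     tdd_size C \<le> 4 * (K * ((D + 1) * 3 ^ D)) ^ 2 * 2 ^ (18 * K)"
proof -
  let ?F = "Fk K D" and ?T = "vt K D []"
  have over: "set (vt_leaves ?T) = cnf_vars ?F" using vars_top[OF K] .
  have dist: "distinct (vt_leaves ?T)" using distinct_vt K by simp
  have vo: "vtree_over ?T (cnf_vars ?F)" unfolding vtree_over_def using over dist by simp
  have bd: "card (bd ?F t) \<le> 6 * K" if "t \<in> vt_subtrees ?T" for t
    using bd_all[OF K, where w="[]" and r=D and t=t and D=D] that by simp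
  have sz: "tdd_size (mk ?F ?T) \<le> card (vt_subtrees ?T) * 2 ^ (6 * K) * 2 ^ (6 * K) * 2 ^ (6 * K)"
    using size_mk[OF over bd] by simp
  let ?V = "K * ((D + 1) * 3 ^ D)"
  have "length (vt_leaves ?T) = card (cnf_vars ?F)" using distinct_card[OF dist] over by simp
  also have "\<dots> \<le> card (xv ` Vs K D) + card (sv ` Eset K D)"
    unfolding vars_Fk2[OF K] by (rule card_Un_le)
  also have "\<dots> \<le> card (Vs K D) + card (Vs K D \<times> Vs K D)"
  proof (intro add_mono)
    show "card (xv ` Vs K D) \<le> card (Vs K D)" by (rule card_image_le[OF finite_Vs])
    have "Eset K D \<subseteq> Vs K D \<times> Vs K D" unfolding Eset_def by auto
    then have "card (Eset K D) \<le> card (Vs K D \<times> Vs K D)" using finite_Vs by (intro card_mono) auto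
    moreover have "card (sv ` Eset K D) \<le> card (Eset K D)"
      by (rule card_image_le) (use finite_Vs \<open>Eset K D \<subseteq> _\<close> in \<open>auto intro: finite_subset\<close>)
    ultimately show "card (sv ` Eset K D) \<le> card (Vs K D \<times> Vs K D)" by linarith
  qed
  also have "\<dots> \<le> ?V + ?V * ?V"
    using card_Vs[of K D] by (simp add: card_cartesian_product add_mono mult_le_mono)
  also have "\<dots> \<le> 2 * ?V ^ 2"
  proof -
    have "?V \<le> ?V * ?V" by (cases "?V") auto
    then show ?thesis by (simp add: power2_eq_square)
  qed
  finally have len: "length (vt_leaves ?T) \<le> 2 * ?V ^ 2" .
  have "card (vt_subtrees ?T) \<le> 4 * ?V ^ 2" using card_subtrees[of ?T] len by linarith
  then have "tdd_size (mk ?F ?T) \<le> 4 * ?V ^ 2 * 2 ^ (6 * K) * 2 ^ (6 * K) * 2 ^ (6 * K)"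
    using sz by (meson le_trans mult_le_mono1)
  also have "\<dots> = 4 * ?V ^ 2 * 2 ^ (18 * K)" by (simp add: power_add[symmetric])
  finally show ?thesis
    using vo is_tdd_mk[OF over] computes_mk[OF over] by blast
qed

definition ell :: "nat \<Rightarrow> nat" where "ell n = floor_log n"
definition FF :: "nat \<Rightarrow> cnf" where "FF n = Fk (2 * (ell n + 1)) (ell n)"

lemma ell_le: "2 ^ ell n \<le> n + 1"
proof (cases "n = 0")
  case True then show ?thesis unfolding ell_def by simp
next
  case False then show ?thesis unfolding ell_def using floor_log_exp2_le[of n] by simp
qed

lemma Suc_le_pow2: "Suc k \<le> 2 ^ k"
  by (induction k) auto

lemma pow_ident: fixes x :: nat shows "4 * (2 * x * (x * x^2))^2 * (2^36 * x^36) = 2^40 * x^44"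
  by algebra

lemma tdd_part: "\<exists>a d :: nat. \<forall>n. \<exists>T C. vtree_over T (cnf_vars (FF n)) \<and> is_tdd C T \<and>
         (\<forall>\<tau>. tdd_computes C T \<tau> \<longleftrightarrow> cnf_sem (FF n) \<tau>) \<and>
         tdd_size C \<le> a * n ^ d + a"
proof (rule exI[of _ "2^84"], rule exI[of _ 44], rule allI)
  fix n
  let ?l = "ell n" and ?N = "n + 1"
  let ?K = "2 * (?l + 1)"
  obtain T C where TC: "vtree_over T (cnf_vars (FF n))" "is_tdd C T"
      "\<forall>\<tau>. tdd_computes C T \<tau> \<longleftrightarrow> cnf_sem (FF n) \<tau>"
      "tdd_size C \<le> 4 * (?K * ((?l + 1) * 3 ^ ?l)) ^ 2 * 2 ^ (18 * ?K)"
    using tdd_Fk[of ?K ?l] unfolding FF_def by auto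
  have p: "2 ^ ?l \<le> ?N" by (rule ell_le)
  have l1: "?l + 1 \<le> ?N" using Suc_le_pow2[of ?l] p by simp
  have K: "?K \<le> 2 * ?N" using l1 by simp
  have t3: "(3::nat) ^ ?l \<le> ?N ^ 2"
  proof -
    have "(3::nat) ^ ?l \<le> 4 ^ ?l" by (rule power_mono) auto
    also have "\<dots> = (2 ^ ?l) ^ 2" by (simp add: power2_eq_square power_mult_distrib[symmetric])
    also have "\<dots> \<le> ?N ^ 2" using p by (rule power_mono) simp
    finally show ?thesis .
  qed
  have e: "(2::nat) ^ (18 * ?K) = 2 ^ 36 * (2 ^ ?l) ^ 36"
    by (simp add: power_add power_mult[symmetric] algebra_simps)
  have "(2::nat) ^ (18 * ?K) \<le> 2 ^ 36 * ?N ^ 36" unfolding e using p by (intro mult_le_mono2 power_mono) auto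
  moreover have "?K * ((?l + 1) * 3 ^ ?l) \<le> 2 * ?N * (?N * ?N ^ 2)"
    using K l1 t3 by (intro mult_le_mono mult_le_mono2) auto
  ultimately have "tdd_size C \<le> 4 * (2 * ?N * (?N * ?N ^ 2)) ^ 2 * (2 ^ 36 * ?N ^ 36)"
    using TC(4) by (meson le_trans mult_le_mono power_mono zero_le order_refl)
  also have "\<dots> = 2 ^ 40 * ?N ^ 44" by (rule pow_ident)
  also have "\<dots> \<le> 2 ^ 40 * (2 ^ 44 * (n ^ 44 + 1))"
  proof -
    have "?N ^ 44 \<le> 2 ^ 44 * (n ^ 44 + 1)"
    proof (cases "n = 0")
      case True then show ?thesis by simp
    next
      case False
      then have "?N \<le> 2 * n" by simp
      then have "?N ^ 44 \<le> (2 * n) ^ 44" by (rule power_mono) simp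
      then show ?thesis by (simp add: power_mult_distrib)
    qed
    then show ?thesis by simp
  qed
  also have "\<dots> = 2 ^ 84 * n ^ 44 + 2 ^ 84" by (simp add: algebra_simps power_add[symmetric])
  finally show "\<exists>T C. vtree_over T (cnf_vars (FF n)) \<and> is_tdd C T \<and>
         (\<forall>\<tau>. tdd_computes C T \<tau> \<longleftrightarrow> cnf_sem (FF n) \<tau>) \<and>
         tdd_size C \<le> 2 ^ 84 * n ^ 44 + 2 ^ 84" using TC by blast
qed

lemma obdd_part: "\<exists>c :: real. c > 0 \<and>
        (\<forall>\<^sub>F n in sequentially. \<forall>B. is_obdd B (cnf_vars (FF n)) \<and>
            (\<forall>\<tau>. obdd_accepts B \<tau> \<longleftrightarrow> cnf_sem (FF n) \<tau>) \<longrightarrow>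
            real (obdd_size B) \<ge> real n powr (c * log 2 (real n)))"
proof (intro exI conjI)
  show "(1/2::real) > 0" by simp
  show "\<forall>\<^sub>F n in sequentially. \<forall>B. is_obdd B (cnf_vars (FF n)) \<and>
            (\<forall>\<tau>. obdd_accepts B \<tau> \<longleftrightarrow> cnf_sem (FF n) \<tau>) \<longrightarrow>
            real (obdd_size B) \<ge> real n powr (1/2 * log 2 (real n))"
    unfolding eventually_sequentially
  proof (intro exI[of _ 2] allI impI)
    fix n :: nat and B
    assume n: "2 \<le> n" and hB: "is_obdd B (cnf_vars (FF n)) \<and> (\<forall>\<tau>. obdd_accepts B \<tau> \<longleftrightarrow> cnf_sem (FF n) \<tau>)"
    let ?l = "ell n"
    have l1: "1 \<le> ?l" using floor_log_rec[OF n] unfolding ell_def by simp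
    have lo: "2 ^ ((?l + 1) * ?l) \<le> obdd_size B"
      using obdd_lower[of "?l + 1" B ?l] hB unfolding FF_def by simp
    have nlt: "real n < 2 ^ (?l + 1)"
    proof -
      have "n < 2 ^ (?l + 1)" using floor_log_exp2_gt[of n] unfolding ell_def by simp
      then have "real n < real (2 ^ (?l + 1))" by (simp only: of_nat_less_iff)
      then show ?thesis by (simp only: of_nat_power of_nat_numeral)
    qed
    have Lt: "log 2 (real n) < real (?l + 1)"
    proof -
      have lt: "log 2 (real n) < log 2 ((2::real) ^ (?l + 1))" using n nlt by (intro log_less) auto
      have eq: "log 2 ((2::real) ^ (?l + 1)) = real (?l + 1)" by (intro log_pow_cancel) auto
      show ?thesis using lt eq by linarith
    qed
    have L0: "0 \<le> log 2 (real n)" using n by simp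
    have "real n powr (1/2 * log 2 (real n)) = (2 powr log 2 (real n)) powr (1/2 * log 2 (real n))"
      using n by (simp add: powr_log_cancel)
    also have "\<dots> = 2 powr (log 2 (real n) * (1/2 * log 2 (real n)))" by (rule powr_powr)
    also have "\<dots> \<le> 2 powr (real ((?l + 1) * ?l))"
    proof (rule powr_mono)
      have "log 2 (real n) * (1/2 * log 2 (real n)) \<le> real (?l + 1) * (1/2 * real (?l + 1))"
        using Lt L0 by (intro mult_mono) auto
      also have "\<dots> \<le> real ((?l + 1) * ?l)"
      proof -
        have r1: "1 \<le> real ?l" using l1 by simp
        have "1 \<le> real ?l * real ?l" using mult_mono[OF r1 r1] by simp
        then show ?thesis using r1 by (simp add: algebra_simps)
      qed
      finally show "log 2 (real n) * (1/2 * log 2 (real n)) \<le> real ((?l + 1) * ?l)" .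
    qed simp
    also have "\<dots> = 2 ^ ((?l + 1) * ?l)" by (rule powr_realpow) simp
    also have "\<dots> \<le> real (obdd_size B)" using lo by (metis of_nat_le_iff of_nat_numeral of_nat_power)
    finally show "real n powr (1/2 * log 2 (real n)) \<le> real (obdd_size B)" .
  qed
qed

theorem theorem18:
  "\<exists>F :: nat \<Rightarrow> cnf.
     (\<exists>a d :: nat. \<forall>n. \<exists>T C. vtree_over T (cnf_vars (F n)) \<and> is_tdd C T \<and>
         (\<forall>\<tau>. tdd_computes C T \<tau> \<longleftrightarrow> cnf_sem (F n) \<tau>) \<and>
         tdd_size C \<le> a * n ^ d + a) \<and>
     (\<exists>c :: real. c > 0 \<and>
        (\<forall>\<^sub>F n in sequentially. \<forall>B. is_obdd B (cnf_vars (F n)) \<and>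
            (\<forall>\<tau>. obdd_accepts B \<tau> \<longleftrightarrow> cnf_sem (F n) \<tau>) \<longrightarrow>
            real (obdd_size B) \<ge> real n powr (c * log 2 (real n))))"
  using tdd_part obdd_part by blast

end
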